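(* Let $F=A^\sharp\circ B\circ P$, where $A\in\mathbb{T}^{m\times n}$ has at least one finite entry per column, $B\in\mathbb{T}^{m\times q}$ has at least one finite entry per row, the finite entries of $A,B$ are integers, and $P\in\mathbb{R}^{q\times n}$ is row-stochastic with $P_{il}=Q_{il}/M$ for integers $Q_{il}$ and a positive integer $M$. Suppose $F$ has a bias vector, and let $v^\ast$ be its Blackwell bias. Then \[ R(F)\le\|v^\ast\|_H\le 10\,n^2\,W\,M^{\min\{k,n-1\}}, \] where $k$ is the number of nondeterministic states.
   Context: $\mathbb{T}=\mathbb{R}\cup\{-\infty\}$; $\mathbb{0}=-\infty$. For $C\in\mathbb{T}^{r\times s}$: $(C\odot z)_i=\max_j(C_{ij}+z_j)$; $C^\sharp(y)_j=\min_i(-C_{ij}+y_i)$ with $(+\infty)+(-\infty)=+\infty$; $Pz$ is the usual product with $0\cdot(-\infty)=0$; so $F(x)=A^\sharp(B\odot(Px))$ maps $\mathbb{R}^n$ to $\mathbb{R}^n$. $W=\max\{|A_{ij}-B_{ih}|: A_{ij}\ne-\infty,\ B_{ih}\ne-\infty,\ i\in[m],\ j\in[n],\ h\in[q]\}$. A state $i\in[q]$ is nondeterministic if $P_{il}>0$ and $P_{il'}>0$ for some $l\ne l'$. $\|x\|_H=\max_i x_i-\min_i x_i$. A bias vector is $v\in\mathbb{R}^n$ with $F(v)=\lambda+v$ for some $\lambda\in\mathbb{R}$; $\lambda=\rho(F)$ is unique (ergodic constant). $R(F)=\inf\{\|u\|_H: u\in\mathbb{R}^n,\ F(u)=\rho(F)+u\}$.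 For $0<\alpha<1$, $v_\alpha\in\mathbb{R}^n$ denotes the unique solution of $v_\alpha=F(\alpha v_\alpha)$ (value of the discounted game); the limit $v^\ast=\lim_{\alpha\to1^-}\bigl(v_\alpha-\rho(F)/(1-\alpha)\bigr)$ exists and is a bias vector, called the Blackwell bias. *)

theory Defs
  imports "HOL-Analysis.Analysis"
begin

text \<open>Tropical numbers are represented in ereal; entries of tropical matrices are
  required (by hypothesis) to differ from PInfty. Vectors in R^n are real^'n.\<close>

definition trop_mul :: "ereal^'q^'m \<Rightarrow> real^'q \<Rightarrow> ereal^'m" where
  "trop_mul C z = (\<chi> i. Max (range (\<lambda>h. C$i$h + ereal (z$h))))"

text \<open>C^sharp(y)_j = min_i (-C_ij + y_i); ereal addition satisfies
  PInfty + MInfty = PInfty, matching the convention.\<close>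
definition trop_sharp :: "ereal^'n^'m \<Rightarrow> ereal^'m \<Rightarrow> ereal^'n" where
  "trop_sharp C y = (\<chi> j. Min (range (\<lambda>i. - C$i$j + y$i)))"

definition shapley :: "ereal^'n^'m \<Rightarrow> ereal^'q^'m \<Rightarrow> real^'n^'q \<Rightarrow> real^'n \<Rightarrow> real^'n" where
  "shapley A B P x = (\<chi> j. real_of_ereal (trop_sharp A (trop_mul B (P *v x)) $ j))"

definition hnorm :: "real^'n \<Rightarrow> real" where
  "hnorm x = Max (range (\<lambda>i. x$i)) - Min (range (\<lambda>i. x$i))"

definition is_bias :: "(real^'n \<Rightarrow> real^'n) \<Rightarrow> real^'n \<Rightarrow> bool" where
  "is_bias F v \<longleftrightarrow> (\<exists>c::real. F v = (\<chi> i. c + v$i))"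

definition ergodic_const :: "(real^'n \<Rightarrow> real^'n) \<Rightarrow> real" where
  "ergodic_const F = (THE c. \<exists>v. F v = (\<chi> i. c + v$i))"

definition R_F :: "(real^'n \<Rightarrow> real^'n) \<Rightarrow> real" where
  "R_F F = Inf (hnorm ` {u. F u = (\<chi> i. ergodic_const F + u$i)})"

definition disc_value :: "(real^'n \<Rightarrow> real^'n) \<Rightarrow> real \<Rightarrow> real^'n" where
  "disc_value F \<alpha> = (THE v. v = F (\<alpha> *\<^sub>R v))"

definition blackwell_bias :: "(real^'n \<Rightarrow> real^'n) \<Rightarrow> real^'n" where
  "blackwell_bias F = Lim (at_left 1)
     (\<lambda>\<alpha>. disc_value F \<alpha> - (\<chi> i. ergodic_const F / (1 - \<alpha>)))"

definition W_param :: "ereal^'n^'m \<Rightarrow> ereal^'q^'m \<Rightarrow> real" where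
  "W_param A B = Max {\<bar>real_of_ereal (A$i$j) - real_of_ereal (B$i$h)\<bar> | i j h.
                        A$i$j \<noteq> -\<infinity> \<and> B$i$h \<noteq> -\<infinity>}"

definition nondet_states :: "real^'n^'q \<Rightarrow> 'q set" where
  "nondet_states P = {i. \<exists>l l'. l \<noteq> l' \<and> P$i$l > 0 \<and> P$i$l' > 0}"

end

theory Submission
  imports Defs "HOL-Computational_Algebra.Polynomial"
begin


definition snorm :: "real^'n \<Rightarrow> real" where
  "snorm x = Max (range (\<lambda>i. \<bar>x$i\<bar>))"

lemma snorm_ge: "\<bar>x$i\<bar> \<le> snorm x"
  unfolding snorm_def by (rule Max_ge) auto

lemma snorm_le: "(\<And>i. \<bar>x$i\<bar> \<le> c) \<Longrightarrow> snorm x \<le> c"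
  unfolding snorm_def by (subst Max_le_iff) auto

lemma snorm_nonneg: "snorm x \<ge> 0"
  using snorm_ge[of x] by (meson abs_ge_zero order_trans)

lemma norm_le_snorm: "norm (x::real^'n) \<le> real CARD('n) * snorm x"
proof -
  have "norm x \<le> (\<Sum>i\<in>UNIV. \<bar>x$i\<bar>)"
    by (rule norm_le_l1_cart[unfolded real_norm_def])
  also have "\<dots> \<le> (\<Sum>i\<in>(UNIV::'n set). snorm x)"
    by (rule sum_mono) (rule snorm_ge)
  finally show ?thesis by simp
qed

lemma Max_mono_fun:
  assumes "finite S" "S \<noteq> {}" "\<And>s. s \<in> S \<Longrightarrow> f s \<le> (g s::real)"
  shows "Max (f ` S) \<le> Max (g ` S)"
  using assms by (subst Max_le_iff) (auto intro: order_trans[OF _ Max_ge])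

lemma Min_mono_fun:
  assumes "finite S" "S \<noteq> {}" "\<And>s. s \<in> S \<Longrightarrow> f s \<le> (g s::real)"
  shows "Min (f ` S) \<le> Min (g ` S)"
  using assms by (subst Min_ge_iff) (auto intro: order_trans[OF Min_le])

locale game =
  fixes Is :: "'n::finite \<Rightarrow> 'm::finite set" and Hs :: "'m \<Rightarrow> 'q::finite set"
    and cc :: "'m \<Rightarrow> 'n \<Rightarrow> 'q \<Rightarrow> real" and P :: "real^'n^'q" and W :: real
  assumes Is_ne: "Is j \<noteq> {}" and Hs_ne: "Hs i \<noteq> {}"
    and P_nonneg: "P$h$l \<ge> 0" and P_stoch: "(\<Sum>l\<in>UNIV. P$h$l) = 1"
    and cc_bound: "i \<in> Is j \<Longrightarrow> h \<in> Hs i \<Longrightarrow> \<bar>cc i j h\<bar> \<le> W"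
begin

definition F :: "real^'n \<Rightarrow> real^'n" where
  "F x = (\<chi> j. Min ((\<lambda>i. Max ((\<lambda>h. cc i j h + (P *v x)$h) ` Hs i)) ` Is j))"

lemma Pv_mono: "(\<And>i. x$i \<le> y$i) \<Longrightarrow> (P *v x)$h \<le> (P *v y)$h"
  unfolding matrix_vector_mult_def
  by (auto intro!: sum_mono mult_left_mono P_nonneg)

lemma Pv_shift: "(P *v (\<chi> i. x$i + t))$h = (P *v x)$h + t"
proof -
  have "(P *v (\<chi> i. x$i + t))$h = (\<Sum>l\<in>UNIV. P$h$l * x$l) + (\<Sum>l\<in>UNIV. P$h$l) * t"
    unfolding matrix_vector_mult_def by (simp add: algebra_simps sum.distrib sum_distrib_right sum_distrib_left)
  then show ?thesis using P_stoch by (simp add: matrix_vector_mult_def)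
qed

lemma F_mono: assumes "\<And>i. x$i \<le> y$i" shows "F x $ j \<le> F y $ j"
proof -
  have "Max ((\<lambda>h. cc i j h + (P *v x)$h) ` Hs i) \<le> Max ((\<lambda>h. cc i j h + (P *v y)$h) ` Hs i)" for i
    by (rule Max_mono_fun) (auto simp: Hs_ne Pv_mono assms)
  then show ?thesis unfolding F_def
    by simp (rule Min_mono_fun, auto simp: Is_ne)
qed

lemma F_shift: "F (\<chi> i. x$i + t) $ j = F x $ j + t"
proof -
  have "F (\<chi> i. x$i + t) $ j =
     Min ((\<lambda>i. Max ((\<lambda>h. (cc i j h + (P *v x)$h) + t) ` Hs i)) ` Is j)"
    unfolding F_def by (simp add: Pv_shift add.assoc)
  also have "\<dots> = Min ((\<lambda>i. Max ((\<lambda>h. (cc i j h + (P *v x)$h)) ` Hs i) + t) ` Is j)"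
    using Hs_ne by (subst Max_add_commute) auto
  also have "\<dots> = F x $ j + t"
    unfolding F_def using Is_ne by (subst Min_add_commute) auto
  finally show ?thesis .
qed

lemma F_nonexp: "\<bar>F x $ j - F y $ j\<bar> \<le> snorm (x - y)"
proof -
  let ?s = "snorm (x - y)"
  have h: "\<bar>x$i - y$i\<bar> \<le> ?s" for i using snorm_ge[of "x-y" i] by simp
  have h2: "x$i \<le> y$i + ?s" and h3: "y$i \<le> x$i + ?s" for i using h[of i] by (auto simp: abs_le_iff)
  have "F x $ j \<le> F (\<chi> i. y$i + ?s) $ j"
    by (rule F_mono) (simp add: h2)
  moreover have "F y $ j \<le> F (\<chi> i. x$i + ?s) $ j"
    by (rule F_mono) (simp add: h3)
  ultimately show ?thesis by (simp add: F_shift abs_le_iff)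
qed

lemma F_snorm: "snorm (F x - F y) \<le> snorm (x - y)"
  by (rule snorm_le) (simp add: F_nonexp)

lemma F_lipschitz: "norm (F x - F y) \<le> real CARD('n) * norm (x - y)"
proof -
  have "norm (F x - F y) \<le> real CARD('n) * snorm (F x - F y)" by (rule norm_le_snorm)
  also have "\<dots> \<le> real CARD('n) * snorm (x - y)" by (intro mult_left_mono F_snorm) auto
  also have "snorm (x - y) \<le> norm (x - y)"
    by (rule snorm_le) (metis component_le_norm_cart vector_minus_component)
  then have "real CARD('n) * snorm (x - y) \<le> real CARD('n) * norm (x - y)"
    by (simp add: mult_left_mono)
  finally show ?thesis .
qed

lemma F_cont: "continuous_on UNIV F"
proof (rule continuous_onI)
  fix x and e :: real assume e: "e > 0"
  show "\<exists>d>0. \<forall>x'\<in>UNIV. dist x' x < d \<longrightarrow> dist (F x') (F x) \<le> e"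
  proof (intro exI[of _ "e / real CARD('n)"] conjI ballI impI)
    show "e / real CARD('n) > 0" using e by simp
    fix x' assume "dist x' x < e / real CARD('n)"
    then have "real CARD('n) * dist x' x \<le> e" by (simp add: field_simps)
    then show "dist (F x') (F x) \<le> e"
      using F_lipschitz[of x' x] by (simp add: dist_norm)
  qed
qed

lemma F_tendsto:
  assumes "(f \<longlongrightarrow> a) net" shows "((\<lambda>x. F (f x)) \<longlongrightarrow> F a) net"
  using continuous_on_tendsto_compose[OF F_cont assms] by simp

end


context game begin

lemma G_contr:
  assumes "0 \<le> \<alpha>"
  shows "snorm (F (\<alpha> *\<^sub>R x) - F (\<alpha> *\<^sub>R y)) \<le> \<alpha> * snorm (x - y)"
proof -
  have "snorm (F (\<alpha> *\<^sub>R x) - F (\<alpha> *\<^sub>R y)) \<le> snorm (\<alpha> *\<^sub>R x - \<alpha> *\<^sub>R y)" by (rule F_snorm)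
  also have "\<dots> \<le> \<alpha> * snorm (x - y)"
  proof (rule snorm_le)
    fix i
    have "\<bar>(\<alpha> *\<^sub>R x - \<alpha> *\<^sub>R y)$i\<bar> = \<alpha> * \<bar>(x - y)$i\<bar>"
    proof -
      have "(\<alpha> *\<^sub>R x - \<alpha> *\<^sub>R y)$i = \<alpha> * (x - y)$i" by (simp add: right_diff_distrib)
      then show ?thesis using assms by (simp add: abs_mult)
    qed
    also have "\<dots> \<le> \<alpha> * snorm (x - y)" using assms snorm_ge[of "x-y" i] by (simp add: mult_left_mono)
    finally show "\<bar>(\<alpha> *\<^sub>R x - \<alpha> *\<^sub>R y)$i\<bar> \<le> \<alpha> * snorm (x - y)" .
  qed
  finally show ?thesis .
qed

lemma snorm_zero: assumes "snorm x \<le> 0" shows "x = 0"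
proof -
  have "\<bar>x$i\<bar> \<le> 0" for i using snorm_ge[of x i] assms by linarith
  then show ?thesis by (simp add: vec_eq_iff)
qed

lemma G_unique:
  assumes "0 \<le> \<alpha>" "\<alpha> < 1" "x = F (\<alpha> *\<^sub>R x)" "y = F (\<alpha> *\<^sub>R y)"
  shows "x = y"
proof -
  have "snorm (x - y) \<le> \<alpha> * snorm (x - y)" using G_contr[OF assms(1), of x y] assms(3,4) by simp
  then have "(1 - \<alpha>) * snorm (x - y) \<le> 0" by (simp add: algebra_simps)
  then have "snorm (x - y) \<le> 0" using assms(2) by (simp add: mult_le_0_iff)
  then show ?thesis using snorm_zero[of "x - y"] by simp
qed

lemma G_pow_contr:
  assumes "0 \<le> \<alpha>"
  shows "snorm (((\<lambda>x. F (\<alpha> *\<^sub>R x)) ^^ N) x - ((\<lambda>x. F (\<alpha> *\<^sub>R x)) ^^ N) y) \<le> \<alpha>^N * snorm (x - y)"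
proof (induction N)
  case 0 then show ?case by simp
next
  case (Suc N)
  let ?G = "\<lambda>x. F (\<alpha> *\<^sub>R x)"
  have "snorm ((?G ^^ Suc N) x - (?G ^^ Suc N) y) \<le> \<alpha> * snorm ((?G ^^ N) x - (?G ^^ N) y)"
    using G_contr[OF assms] by simp
  also have "\<dots> \<le> \<alpha> * (\<alpha>^N * snorm (x - y))" using Suc assms by (simp add: mult_left_mono)
  finally show ?case by simp
qed

lemma G_exists:
  assumes "0 \<le> \<alpha>" "\<alpha> < 1"
  shows "\<exists>x. x = F (\<alpha> *\<^sub>R x)"
proof -
  let ?G = "\<lambda>x. F (\<alpha> *\<^sub>R x)"
  let ?C = "real CARD('n)"
  have C: "?C \<ge> 1" by simp
  obtain N where N: "\<alpha>^N < 1 / ?C" using real_arch_pow_inv[of "1 / ?C" \<alpha>] assms by auto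
  have lip: "dist ((?G ^^ N) x) ((?G ^^ N) y) \<le> (?C * \<alpha>^N) * dist x y" for x y
  proof -
    have "dist ((?G ^^ N) x) ((?G ^^ N) y) \<le> ?C * snorm ((?G ^^ N) x - (?G ^^ N) y)"
      unfolding dist_norm by (rule norm_le_snorm)
    also have "\<dots> \<le> ?C * (\<alpha>^N * snorm (x - y))"
      by (intro mult_left_mono G_pow_contr assms) auto
    also have "snorm (x - y) \<le> dist x y" unfolding dist_norm
      by (rule snorm_le) (metis component_le_norm_cart vector_minus_component)
    then have "?C * (\<alpha>^N * snorm (x - y)) \<le> ?C * (\<alpha>^N * dist x y)"
      using assms by (intro mult_left_mono) auto
    finally show ?thesis by (simp add: mult.assoc)
  qed
  have "?C * \<alpha>^N < 1" using N C by (simp add: field_simps)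
  then obtain z where z: "(?G ^^ N) z = z"
    using banach_fix_type[of "?C * \<alpha>^N" "?G ^^ N"] lip assms by auto
  have "(?G ^^ N) (?G z) = ?G z"
    by (metis comp_apply funpow_swap1 z)
  have "?G z = z"
  proof -
    have "(?G ^^ N) (?G z) = ?G z" by (metis funpow_swap1 z)
    moreover have "\<exists>!x. (?G ^^ N) x = x"
      using banach_fix_type[of "?C * \<alpha>^N" "?G ^^ N"] lip assms \<open>?C * \<alpha>^N < 1\<close> by auto
    ultimately show ?thesis using z by auto
  qed
  then show ?thesis by metis
qed

lemma disc_value_fix:
  assumes "0 \<le> \<alpha>" "\<alpha> < 1"
  shows "disc_value F \<alpha> = F (\<alpha> *\<^sub>R disc_value F \<alpha>)"
  unfolding disc_value_def
  by (rule theI') (use G_exists[OF assms] G_unique[OF assms] in blast)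

lemma disc_value_eq:
  assumes "0 \<le> \<alpha>" "\<alpha> < 1" "v = F (\<alpha> *\<^sub>R v)"
  shows "disc_value F \<alpha> = v"
  using G_unique[OF assms(1,2) disc_value_fix[OF assms(1,2)] assms(3)] .

lemma erg_le:
  assumes "F v = (\<chi> i. c + v$i)" "F v' = (\<chi> i. c' + v'$i)"
  shows "c \<le> c'"
proof -
  let ?s = "Max (range (\<lambda>i. v$i - v'$i))"
  have "?s \<in> range (\<lambda>i. v$i - v'$i)" by (rule Max_in) auto
  then obtain j0 where j0: "?s = v$j0 - v'$j0" by blast
  have "v$i - v'$i \<le> ?s" for i by (rule Max_ge) auto
  then have "v$i \<le> v'$i + ?s" for i by (metis add.commute diff_le_eq)
  then have "F v $ j0 \<le> F (\<chi> i. v'$i + ?s) $ j0" by (intro F_mono) (simp only: vec_lambda_beta)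
  also have "\<dots> = F v' $ j0 + ?s" by (rule F_shift)
  finally have "F v $ j0 \<le> F v' $ j0 + ?s" .
  then have "c + v$j0 \<le> c' + v'$j0 + ?s" using assms by simp
  then show ?thesis using j0 by linarith
qed

lemma erg_unique:
  assumes "F v = (\<chi> i. c + v$i)"
  shows "ergodic_const F = c"
  unfolding ergodic_const_def
proof (rule the_equality)
  show "\<exists>v. F v = (\<chi> i. c + v $ i)" using assms by blast
  fix c' assume "\<exists>v. F v = (\<chi> i. c' + v $ i)"
  then obtain v' where "F v' = (\<chi> i. c' + v' $ i)" by blast
  then show "c' = c" using erg_le[OF assms] erg_le[OF _ assms] by (meson antisym)
qed

lemma Pv_le_max: "(P *v x)$h \<le> Max (range (\<lambda>l. x$l))"
proof -
  have "(P *v x)$h = (\<Sum>l\<in>UNIV. P$h$l * x$l)" by (simp add: matrix_vector_mult_def)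
  also have "\<dots> \<le> (\<Sum>l\<in>UNIV. P$h$l * Max (range (\<lambda>l. x$l)))"
    by (intro sum_mono mult_left_mono P_nonneg) auto
  also have "\<dots> = Max (range (\<lambda>l. x$l))" using P_stoch[of h] by (simp add: sum_distrib_right[symmetric])
  finally show ?thesis .
qed

lemma Pv_ge_min: "(P *v x)$h \<ge> Min (range (\<lambda>l. x$l))"
proof -
  have "(\<Sum>l\<in>UNIV. P$h$l * Min (range (\<lambda>l. x$l))) \<le> (\<Sum>l\<in>UNIV. P$h$l * x$l)"
    by (intro sum_mono mult_left_mono P_nonneg) auto
  then show ?thesis using P_stoch[of h] by (simp add: sum_distrib_right[symmetric] matrix_vector_mult_def)
qed

lemma F_upper: "F x $ j \<le> W + Max (range (\<lambda>l. x$l))"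
proof -
  obtain i where i: "i \<in> Is j" using Is_ne by blast
  have "F x $ j \<le> Max ((\<lambda>h. cc i j h + (P *v x)$h) ` Hs i)"
    unfolding F_def using i by simp
  also have "\<dots> \<le> W + Max (range (\<lambda>l. x$l))"
    using Hs_ne[of i] cc_bound[OF i] Pv_le_max
    by (subst Max_le_iff) (auto simp: abs_le_iff intro: add_mono)
  finally show ?thesis .
qed

lemma F_lower: "F x $ j \<ge> - W + Min (range (\<lambda>l. x$l))"
proof -
  have "- W + Min (range (\<lambda>l. x$l)) \<le> Max ((\<lambda>h. cc i j h + (P *v x)$h) ` Hs i)" if i: "i \<in> Is j" for i
  proof -
    obtain h where h: "h \<in> Hs i" using Hs_ne by blast
    have "- W + Min (range (\<lambda>l. x$l)) \<le> cc i j h + (P *v x)$h"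
      using cc_bound[OF i h] Pv_ge_min[of x h] by (auto simp: abs_le_iff)
    also have "\<dots> \<le> Max ((\<lambda>h. cc i j h + (P *v x)$h) ` Hs i)" using h by (intro Max_ge) auto
    finally show ?thesis .
  qed
  then show ?thesis unfolding F_def vec_lambda_beta using Is_ne[of j] by (subst Min_ge_iff) auto
qed

lemma erg_bound:
  assumes "F v = (\<chi> i. c + v$i)"
  shows "\<bar>c\<bar> \<le> W"
proof -
  have "Max (range (\<lambda>l. v$l)) \<in> range (\<lambda>l. v$l)" by (rule Max_in) auto
  then obtain j1 where j1: "Max (range (\<lambda>l. v$l)) = v$j1" by blast
  have "Min (range (\<lambda>l. v$l)) \<in> range (\<lambda>l. v$l)" by (rule Min_in) auto
  then obtain j0 where j0: "Min (range (\<lambda>l. v$l)) = v$j0" by blast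
  have "c + v$j1 \<le> W + v$j1" using F_upper[of v j1] j1 unfolding assms vec_lambda_beta by simp
  moreover have "c + v$j0 \<ge> - W + v$j0" using F_lower[of v j0] j0 unfolding assms vec_lambda_beta by simp
  ultimately show ?thesis by auto
qed

end


section \<open>Polynomial functions\<close>

definition polyfun :: "(real \<Rightarrow> real) \<Rightarrow> bool" where
  "polyfun f \<longleftrightarrow> (\<exists>p. \<forall>x. f x = poly p x)"

lemma polyfun_const[simp]: "polyfun (\<lambda>x. c)"
  unfolding polyfun_def by (rule exI[of _ "[:c:]"]) simp

lemma polyfun_id[simp]: "polyfun (\<lambda>x. x)"
  unfolding polyfun_def by (rule exI[of _ "[:0,1:]"]) simp

lemma polyfun_add: "polyfun f \<Longrightarrow> polyfun g \<Longrightarrow> polyfun (\<lambda>x. f x + g x)"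
  unfolding polyfun_def by (metis poly_add)

lemma polyfun_mult: "polyfun f \<Longrightarrow> polyfun g \<Longrightarrow> polyfun (\<lambda>x. f x * g x)"
  unfolding polyfun_def by (metis poly_mult)

lemma polyfun_diff: "polyfun f \<Longrightarrow> polyfun g \<Longrightarrow> polyfun (\<lambda>x. f x - g x)"
  unfolding polyfun_def by (metis poly_diff)

lemma polyfun_sum: "finite S \<Longrightarrow> (\<And>s. s \<in> S \<Longrightarrow> polyfun (f s)) \<Longrightarrow> polyfun (\<lambda>x. \<Sum>s\<in>S. f s x)"
  by (induction S rule: finite_induct) (auto intro: polyfun_add)

lemma polyfun_prod: "finite S \<Longrightarrow> (\<And>s. s \<in> S \<Longrightarrow> polyfun (f s)) \<Longrightarrow> polyfun (\<lambda>x. \<Prod>s\<in>S. f s x)"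
  by (induction S rule: finite_induct) (auto intro: polyfun_mult)

lemma polyfun_det:
  fixes A :: "real \<Rightarrow> real^'n^'n"
  assumes "\<And>i j. polyfun (\<lambda>x. A x $ i $ j)"
  shows "polyfun (\<lambda>x. det (A x))"
  unfolding det_def
  by (intro polyfun_sum polyfun_mult polyfun_prod assms) (auto simp: finite_permutations)

lemma ev_lt1: "\<forall>\<^sub>F x in at_left (1::real). x < 1"
  using eventually_at_left_real[of 0 1] by (auto elim: eventually_mono)

lemma poly_ev_sign:
  fixes p :: "real poly"
  assumes "p \<noteq> 0"
  shows "(\<forall>\<^sub>F x in at_left 1. poly p x > 0) \<or> (\<forall>\<^sub>F x in at_left 1. poly p x < 0)"
proof -
  obtain q k where q: "p = [:-1,1:] ^ k * q" "\<not> [:-1,1:] dvd q"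
    using order_decomp[OF assms, of 1] by auto
  have q1: "poly q 1 \<noteq> 0" using q(2) poly_eq_0_iff_dvd[of q 1] by simp
  have "((\<lambda>x. poly q x) \<longlongrightarrow> poly q 1) (at 1)" by (rule isContD[OF poly_isCont])
  then have lim: "((\<lambda>x. poly q x) \<longlongrightarrow> poly q 1) (at_left 1)"
    by (rule tendsto_mono[OF at_le, rotated]) auto
  let ?k = k
  have px: "poly p x = (x - 1)^?k * poly q x" for x
    unfolding q(1) by (simp add: poly_power)
  have sgn1: "(\<forall>\<^sub>F x in at_left 1. (x - 1)^?k > (0::real)) \<or> (\<forall>\<^sub>F x in at_left 1. (x - 1)^?k < (0::real))"
  proof (cases "even ?k")
    case True
    have h: "x < 1 \<Longrightarrow> (x - 1)^?k > (0::real)" for x using True by (simp add: zero_less_power_eq)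
    have "\<forall>\<^sub>F x in at_left 1. (x - 1)^?k > (0::real)"
      using ev_lt1 by (rule eventually_mono) (rule h)
    then show ?thesis ..
  next
    case False
    have h: "x < 1 \<Longrightarrow> (x - 1)^?k < (0::real)" for x using False by (simp add: power_less_zero_eq)
    have "\<forall>\<^sub>F x in at_left 1. (x - 1)^?k < (0::real)"
      using ev_lt1 by (rule eventually_mono) (rule h)
    then show ?thesis ..
  qed
  show ?thesis
  proof (cases "poly q 1 > 0")
    case True
    then have e: "\<forall>\<^sub>F x in at_left 1. poly q x > 0" using order_tendstoD(1)[OF lim True] by simp
    from sgn1 show ?thesis
    proof
      assume "\<forall>\<^sub>F x in at_left 1. (x - 1)^?k > (0::real)"
      with e have "\<forall>\<^sub>F x in at_left 1. poly p x > 0"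
        by eventually_elim (simp add: px)
      then show ?thesis ..
    next
      assume "\<forall>\<^sub>F x in at_left 1. (x - 1)^?k < (0::real)"
      with e have "\<forall>\<^sub>F x in at_left 1. poly p x < 0"
        by eventually_elim (simp add: px mult_neg_pos)
      then show ?thesis ..
    qed
  next
    case False
    then have "poly q 1 < 0" using q1 by simp
    then have e: "\<forall>\<^sub>F x in at_left 1. poly q x < 0" using order_tendstoD(2)[OF lim] by simp
    from sgn1 show ?thesis
    proof
      assume "\<forall>\<^sub>F x in at_left 1. (x - 1)^?k > (0::real)"
      with e have "\<forall>\<^sub>F x in at_left 1. poly p x < 0"
        by eventually_elim (simp add: px mult_pos_neg)
      then show ?thesis ..
    next
      assume "\<forall>\<^sub>F x in at_left 1. (x - 1)^?k < (0::real)"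
      with e have "\<forall>\<^sub>F x in at_left 1. poly p x > 0"
        by eventually_elim (simp add: px mult_neg_neg)
      then show ?thesis ..
    qed
  qed
qed

lemma poly_ev_nz: "p \<noteq> 0 \<Longrightarrow> \<forall>\<^sub>F x in at_left 1. poly p x \<noteq> (0::real)"
  using poly_ev_sign[of p] by (auto elim: eventually_mono)

section \<open>Eventually rational functions\<close>

definition ratf :: "(real \<Rightarrow> real) \<Rightarrow> bool" where
  "ratf f \<longleftrightarrow> (\<exists>p q. q \<noteq> 0 \<and> (\<forall>\<^sub>F x in at_left 1. f x = poly p x / poly q x))"

lemma ratf_cong: assumes "ratf f" "\<forall>\<^sub>F x in at_left 1. f x = g x" shows "ratf g"
proof -
  obtain p q where q: "q \<noteq> 0" and e: "\<forall>\<^sub>F x in at_left 1. f x = poly p x / poly q x"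
    using assms(1) unfolding ratf_def by blast
  have "\<forall>\<^sub>F x in at_left 1. g x = poly p x / poly q x" using e assms(2) by eventually_elim simp
  then show ?thesis unfolding ratf_def using q by blast
qed

lemma ratf_poly: "q \<noteq> 0 \<Longrightarrow> ratf (\<lambda>x. poly p x / poly q x)"
  unfolding ratf_def by (intro exI[of _ p] exI[of _ q]) auto

lemma ratf_polyfun: assumes "polyfun f" shows "ratf f"
proof -
  obtain p where "\<forall>x. f x = poly p x" using assms unfolding polyfun_def by blast
  then have "\<forall>\<^sub>F x in at_left 1. f x = poly p x / poly 1 x" by simp
  then show ?thesis unfolding ratf_def by (intro exI[of _ p] exI[of _ 1]) auto
qed

lemma ratf_polyfun_div:
  assumes "polyfun f" "polyfun g" "g x0 \<noteq> 0" shows "ratf (\<lambda>x. f x / g x)"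
proof -
  obtain p where p: "\<forall>x. f x = poly p x" using assms(1) unfolding polyfun_def by blast
  obtain q where q: "\<forall>x. g x = poly q x" using assms(2) unfolding polyfun_def by blast
  have "q \<noteq> 0" using q assms(3) by auto
  moreover have "\<forall>\<^sub>F x in at_left 1. f x / g x = poly p x / poly q x" using p q by simp
  ultimately show ?thesis unfolding ratf_def by blast
qed

lemma ratf_const[simp]: "ratf (\<lambda>x. c)"
  by (rule ratf_polyfun) simp

lemma ratf_id[simp]: "ratf (\<lambda>x. x)"
  by (rule ratf_polyfun) simp

lemma ratf_add: assumes "ratf f" "ratf g" shows "ratf (\<lambda>x. f x + g x)"
proof -
  obtain p1 q1 p2 q2 where q: "q1 \<noteq> 0" "q2 \<noteq> 0"
    and e1: "\<forall>\<^sub>F x in at_left 1. f x = poly p1 x / poly q1 x"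
    and e2: "\<forall>\<^sub>F x in at_left 1. g x = poly p2 x / poly q2 x"
    using assms unfolding ratf_def by blast
  have "\<forall>\<^sub>F x in at_left 1. f x + g x = poly (p1 * q2 + p2 * q1) x / poly (q1 * q2) x"
    using e1 e2 poly_ev_nz[OF q(1)] poly_ev_nz[OF q(2)]
    by eventually_elim (simp add: field_simps)
  then show ?thesis unfolding ratf_def using q by (intro exI[of _ "p1 * q2 + p2 * q1"] exI[of _ "q1 * q2"]) auto
qed

lemma ratf_mult: assumes "ratf f" "ratf g" shows "ratf (\<lambda>x. f x * g x)"
proof -
  obtain p1 q1 p2 q2 where q: "q1 \<noteq> 0" "q2 \<noteq> 0"
    and e1: "\<forall>\<^sub>F x in at_left 1. f x = poly p1 x / poly q1 x"
    and e2: "\<forall>\<^sub>F x in at_left 1. g x = poly p2 x / poly q2 x"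
    using assms unfolding ratf_def by blast
  have "\<forall>\<^sub>F x in at_left 1. f x * g x = poly (p1 * p2) x / poly (q1 * q2) x"
    using e1 e2 by eventually_elim (simp add: field_simps)
  then show ?thesis unfolding ratf_def using q by (intro exI[of _ "p1 * p2"] exI[of _ "q1 * q2"]) auto
qed

lemma ratf_uminus: "ratf f \<Longrightarrow> ratf (\<lambda>x. - f x)"
  using ratf_mult[of "\<lambda>x. -1" f] by simp

lemma ratf_diff: "ratf f \<Longrightarrow> ratf g \<Longrightarrow> ratf (\<lambda>x. f x - g x)"
  using ratf_add[of f "\<lambda>x. - g x"] ratf_uminus[of g] by simp

lemma ratf_sum: "finite S \<Longrightarrow> (\<And>s. s \<in> S \<Longrightarrow> ratf (f s)) \<Longrightarrow> ratf (\<lambda>x. \<Sum>s\<in>S. f s x)"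
  by (induction S rule: finite_induct) (auto intro: ratf_add)

lemma ratf_sign:
  assumes "ratf f"
  shows "(\<forall>\<^sub>F x in at_left 1. f x > 0) \<or> (\<forall>\<^sub>F x in at_left 1. f x < 0) \<or> (\<forall>\<^sub>F x in at_left 1. f x = 0)"
proof -
  obtain p q where q: "q \<noteq> 0" and e: "\<forall>\<^sub>F x in at_left 1. f x = poly p x / poly q x"
    using assms unfolding ratf_def by blast
  show ?thesis
  proof (cases "p = 0")
    case True
    then have "\<forall>\<^sub>F x in at_left 1. f x = 0" using e by (auto elim: eventually_mono)
    then show ?thesis by blast
  next
    case False
    from poly_ev_sign[OF False] poly_ev_sign[OF q] e show ?thesis
    proof (elim disjE)
      assume "\<forall>\<^sub>F x in at_left 1. poly p x > 0" "\<forall>\<^sub>F x in at_left 1. poly q x > 0"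
        "\<forall>\<^sub>F x in at_left 1. f x = poly p x / poly q x"
      then have "\<forall>\<^sub>F x in at_left 1. f x > 0" by eventually_elim simp
      then show ?thesis by blast
    next
      assume "\<forall>\<^sub>F x in at_left 1. poly p x > 0" "\<forall>\<^sub>F x in at_left 1. poly q x < 0"
        "\<forall>\<^sub>F x in at_left 1. f x = poly p x / poly q x"
      then have "\<forall>\<^sub>F x in at_left 1. f x < 0" by eventually_elim (simp add: divide_pos_neg)
      then show ?thesis by blast
    next
      assume "\<forall>\<^sub>F x in at_left 1. poly p x < 0" "\<forall>\<^sub>F x in at_left 1. poly q x > 0"
        "\<forall>\<^sub>F x in at_left 1. f x = poly p x / poly q x"
      then have "\<forall>\<^sub>F x in at_left 1. f x < 0" by eventually_elim (simp add: divide_neg_pos)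
      then show ?thesis by blast
    next
      assume "\<forall>\<^sub>F x in at_left 1. poly p x < 0" "\<forall>\<^sub>F x in at_left 1. poly q x < 0"
        "\<forall>\<^sub>F x in at_left 1. f x = poly p x / poly q x"
      then have "\<forall>\<^sub>F x in at_left 1. f x > 0" by eventually_elim (simp add: divide_neg_neg)
      then show ?thesis by blast
    qed
  qed
qed

lemma ratf_cmp:
  assumes "ratf f" "ratf g"
  shows "(\<forall>\<^sub>F x in at_left 1. f x \<le> g x) \<or> (\<forall>\<^sub>F x in at_left 1. g x \<le> f x)"
  using ratf_sign[OF ratf_diff[OF assms]]
proof (elim disjE)
  assume "\<forall>\<^sub>F x in at_left 1. f x - g x > 0"
  then have "\<forall>\<^sub>F x in at_left 1. g x \<le> f x" by (rule eventually_mono) simp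
  then show ?thesis ..
next
  assume "\<forall>\<^sub>F x in at_left 1. f x - g x < 0"
  then have "\<forall>\<^sub>F x in at_left 1. f x \<le> g x" by (rule eventually_mono) simp
  then show ?thesis ..
next
  assume "\<forall>\<^sub>F x in at_left 1. f x - g x = 0"
  then have "\<forall>\<^sub>F x in at_left 1. f x \<le> g x" by (rule eventually_mono) simp
  then show ?thesis ..
qed

lemma ratf_eq_decided:
  assumes "ratf f" "ratf g"
  shows "(\<forall>\<^sub>F x in at_left 1. f x = g x) \<or> (\<forall>\<^sub>F x in at_left 1. f x \<noteq> g x)"
  using ratf_sign[OF ratf_diff[OF assms]]
proof (elim disjE)
  assume "\<forall>\<^sub>F x in at_left 1. f x - g x > 0"
  then have "\<forall>\<^sub>F x in at_left 1. f x \<noteq> g x" by (rule eventually_mono) simp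
  then show ?thesis ..
next
  assume "\<forall>\<^sub>F x in at_left 1. f x - g x < 0"
  then have "\<forall>\<^sub>F x in at_left 1. f x \<noteq> g x" by (rule eventually_mono) simp
  then show ?thesis ..
next
  assume "\<forall>\<^sub>F x in at_left 1. f x - g x = 0"
  then have "\<forall>\<^sub>F x in at_left 1. f x = g x" by (rule eventually_mono) simp
  then show ?thesis ..
qed

lemma ratf_min: assumes "ratf f" "ratf g" shows "ratf (\<lambda>x. min (f x) (g x))"
  using ratf_cmp[OF assms]
proof
  assume "\<forall>\<^sub>F x in at_left 1. f x \<le> g x"
  then have "\<forall>\<^sub>F x in at_left 1. f x = min (f x) (g x)" by (rule eventually_mono) auto
  then show ?thesis by (rule ratf_cong[OF assms(1)])
next
  assume "\<forall>\<^sub>F x in at_left 1. g x \<le> f x"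
  then have "\<forall>\<^sub>F x in at_left 1. g x = min (f x) (g x)" by (rule eventually_mono) auto
  then show ?thesis by (rule ratf_cong[OF assms(2)])
qed

lemma ratf_max: assumes "ratf f" "ratf g" shows "ratf (\<lambda>x. max (f x) (g x))"
  using ratf_cmp[OF assms]
proof
  assume "\<forall>\<^sub>F x in at_left 1. f x \<le> g x"
  then have "\<forall>\<^sub>F x in at_left 1. g x = max (f x) (g x)" by (rule eventually_mono) auto
  then show ?thesis by (rule ratf_cong[OF assms(2)])
next
  assume "\<forall>\<^sub>F x in at_left 1. g x \<le> f x"
  then have "\<forall>\<^sub>F x in at_left 1. f x = max (f x) (g x)" by (rule eventually_mono) auto
  then show ?thesis by (rule ratf_cong[OF assms(1)])
qed

lemma ratf_Min: "finite S \<Longrightarrow> S \<noteq> {} \<Longrightarrow> (\<And>s. s \<in> S \<Longrightarrow> ratf (f s)) \<Longrightarrow> ratf (\<lambda>x. Min ((\<lambda>s. f s x) ` S))"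
proof (induction S rule: finite_ne_induct)
  case (singleton a) then show ?case by simp
next
  case (insert a S)
  have "ratf (\<lambda>x. min (f a x) (Min ((\<lambda>s. f s x) ` S)))"
    using insert by (intro ratf_min) auto
  then show ?case using insert by (simp add: Min_insert)
qed

lemma ratf_Max: "finite S \<Longrightarrow> S \<noteq> {} \<Longrightarrow> (\<And>s. s \<in> S \<Longrightarrow> ratf (f s)) \<Longrightarrow> ratf (\<lambda>x. Max ((\<lambda>s. f s x) ` S))"
proof (induction S rule: finite_ne_induct)
  case (singleton a) then show ?case by simp
next
  case (insert a S)
  have "ratf (\<lambda>x. max (f a x) (Max ((\<lambda>s. f s x) ` S)))"
    using insert by (intro ratf_max) auto
  then show ?case using insert by (simp add: Max_insert)
qed


context game begin

definition valid :: "('n \<Rightarrow> 'm) \<Rightarrow> ('n \<Rightarrow> 'q) \<Rightarrow> bool" where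
  "valid \<sigma> \<tau> \<longleftrightarrow> (\<forall>j. \<sigma> j \<in> Is j \<and> \<tau> j \<in> Hs (\<sigma> j))"

definition Tm :: "('n \<Rightarrow> 'm) \<Rightarrow> ('n \<Rightarrow> 'q) \<Rightarrow> real^'n^'n" where
  "Tm \<sigma> \<tau> = (\<chi> j l. P$(\<tau> j)$l)"

definition cv :: "('n \<Rightarrow> 'm) \<Rightarrow> ('n \<Rightarrow> 'q) \<Rightarrow> real^'n" where
  "cv \<sigma> \<tau> = (\<chi> j. cc (\<sigma> j) j (\<tau> j))"

definition Mat :: "('n \<Rightarrow> 'm) \<Rightarrow> ('n \<Rightarrow> 'q) \<Rightarrow> real \<Rightarrow> real^'n^'n" where
  "Mat \<sigma> \<tau> \<alpha> = mat 1 - \<alpha> *\<^sub>R Tm \<sigma> \<tau>"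

definition uvec :: "('n \<Rightarrow> 'm) \<Rightarrow> ('n \<Rightarrow> 'q) \<Rightarrow> real \<Rightarrow> real^'n" where
  "uvec \<sigma> \<tau> \<alpha> = (\<chi> k. det (\<chi> i j. if j = k then cv \<sigma> \<tau> $ i else Mat \<sigma> \<tau> \<alpha> $ i $ j) / det (Mat \<sigma> \<tau> \<alpha>))"

lemma Tm_v: "(Tm \<sigma> \<tau> *v x)$j = (P *v x)$(\<tau> j)"
  by (simp add: Tm_def matrix_vector_mult_def)

lemma Tm_snorm: "snorm (Tm \<sigma> \<tau> *v x) \<le> snorm x"
proof (rule snorm_le)
  fix j
  have "\<bar>(Tm \<sigma> \<tau> *v x)$j\<bar> = \<bar>\<Sum>l\<in>UNIV. P$(\<tau> j)$l * x$l\<bar>"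
    by (simp only: Tm_v) (simp add: matrix_vector_mult_def)
  also have "\<dots> \<le> (\<Sum>l\<in>UNIV. P$(\<tau> j)$l * \<bar>x$l\<bar>)"
    by (rule order_trans[OF sum_abs]) (simp add: abs_mult P_nonneg)
  also have "\<dots> \<le> (\<Sum>l\<in>UNIV. P$(\<tau> j)$l * snorm x)"
    by (intro sum_mono mult_left_mono P_nonneg snorm_ge)
  also have "\<dots> = snorm x" using P_stoch by (simp add: sum_distrib_right[symmetric])
  finally show "\<bar>(Tm \<sigma> \<tau> *v x)$j\<bar> \<le> snorm x" .
qed

lemma Mat_v: "Mat \<sigma> \<tau> \<alpha> *v x = x - \<alpha> *\<^sub>R (Tm \<sigma> \<tau> *v x)"
  unfolding Mat_def by (simp add: matrix_vector_mult_diff_rdistrib scaleR_matrix_vector_assoc)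

lemma det_Mat_nz:
  assumes "0 \<le> \<alpha>" "\<alpha> < 1"
  shows "det (Mat \<sigma> \<tau> \<alpha>) \<noteq> 0"
proof -
  have inj: "inj (\<lambda>x. Mat \<sigma> \<tau> \<alpha> *v x)"
  proof (rule injI)
    fix x y assume "Mat \<sigma> \<tau> \<alpha> *v x = Mat \<sigma> \<tau> \<alpha> *v y"
    then have "Mat \<sigma> \<tau> \<alpha> *v (x - y) = 0" by (simp add: matrix_vector_mult_diff_distrib)
    then have e: "x - y = \<alpha> *\<^sub>R (Tm \<sigma> \<tau> *v (x - y))" by (simp add: Mat_v)
    have "snorm (\<alpha> *\<^sub>R (Tm \<sigma> \<tau> *v (x - y))) \<le> \<alpha> * snorm (x - y)"
    proof (rule snorm_le)
      fix i
      have "\<bar>(\<alpha> *\<^sub>R (Tm \<sigma> \<tau> *v (x - y)))$i\<bar> = \<alpha> * \<bar>(Tm \<sigma> \<tau> *v (x - y))$i\<bar>"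
        using assms by (simp add: abs_mult)
      also have "\<dots> \<le> \<alpha> * snorm (x - y)"
        using assms snorm_ge[of "Tm \<sigma> \<tau> *v (x - y)" i] Tm_snorm[of \<sigma> \<tau> "x - y"]
        by (intro mult_left_mono) auto
      finally show "\<bar>(\<alpha> *\<^sub>R (Tm \<sigma> \<tau> *v (x - y)))$i\<bar> \<le> \<alpha> * snorm (x - y)" .
    qed
    then have "snorm (x - y) \<le> \<alpha> * snorm (x - y)" using e by simp
    then have "(1 - \<alpha>) * snorm (x - y) \<le> 0" by (simp add: algebra_simps)
    then have "snorm (x - y) \<le> 0" using assms(2) by (simp add: mult_le_0_iff)
    then show "x = y" using snorm_zero[of "x - y"] by simp
  qed
  have "det (matrix (\<lambda>x. Mat \<sigma> \<tau> \<alpha> *v x)) \<noteq> 0"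
    using det_nz_iff_inj[of "\<lambda>x. Mat \<sigma> \<tau> \<alpha> *v x"] inj by simp
  then show ?thesis by simp
qed

lemma uvec_eq:
  assumes "0 \<le> \<alpha>" "\<alpha> < 1"
  shows "uvec \<sigma> \<tau> \<alpha> = cv \<sigma> \<tau> + \<alpha> *\<^sub>R (Tm \<sigma> \<tau> *v uvec \<sigma> \<tau> \<alpha>)"
proof -
  have "Mat \<sigma> \<tau> \<alpha> *v uvec \<sigma> \<tau> \<alpha> = cv \<sigma> \<tau>"
    using cramer[OF det_Mat_nz[OF assms], where x="uvec \<sigma> \<tau> \<alpha>" and b="cv \<sigma> \<tau>"]
    unfolding uvec_def by simp
  then show ?thesis by (simp add: Mat_v algebra_simps)
qed

lemma uvec_unique:
  assumes "0 \<le> \<alpha>" "\<alpha> < 1" "u = cv \<sigma> \<tau> + \<alpha> *\<^sub>R (Tm \<sigma> \<tau> *v u)"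
  shows "u = uvec \<sigma> \<tau> \<alpha>"
proof -
  have "Mat \<sigma> \<tau> \<alpha> *v u = cv \<sigma> \<tau>" using assms(3) by (simp add: Mat_v algebra_simps)
  then show ?thesis
    using cramer[OF det_Mat_nz[OF assms(1,2)], where x=u and b="cv \<sigma> \<tau>"] unfolding uvec_def by simp
qed

lemma F_policy: "\<exists>\<sigma> \<tau>. valid \<sigma> \<tau> \<and> F x = cv \<sigma> \<tau> + Tm \<sigma> \<tau> *v x"
proof -
  let ?g = "\<lambda>i j. Max ((\<lambda>h. cc i j h + (P *v x)$h) ` Hs i)"
  have "\<exists>i h. i \<in> Is j \<and> h \<in> Hs i \<and> F x $ j = cc i j h + (P *v x)$h" for j
  proof -
    have "Min ((\<lambda>i. ?g i j) ` Is j) \<in> (\<lambda>i. ?g i j) ` Is j" by (rule Min_in) (auto simp: Is_ne)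
    then obtain i where i: "i \<in> Is j" "F x $ j = ?g i j" unfolding F_def by auto
    have "?g i j \<in> (\<lambda>h. cc i j h + (P *v x)$h) ` Hs i" by (rule Max_in) (auto simp: Hs_ne)
    then obtain h where h: "h \<in> Hs i" "?g i j = cc i j h + (P *v x)$h" by auto
    show ?thesis using i h by auto
  qed
  then obtain \<sigma> \<tau> where st: "\<And>j. \<sigma> j \<in> Is j \<and> \<tau> j \<in> Hs (\<sigma> j) \<and> F x $ j = cc (\<sigma> j) j (\<tau> j) + (P *v x)$(\<tau> j)"
    by metis
  have "valid \<sigma> \<tau>" using st unfolding valid_def by blast
  moreover have "F x = cv \<sigma> \<tau> + Tm \<sigma> \<tau> *v x"
    using st by (simp add: vec_eq_iff cv_def Tm_v)
  ultimately show ?thesis by blast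
qed



lemma disc_policy:
  assumes "0 \<le> \<alpha>" "\<alpha> < 1"
  shows "\<exists>\<sigma> \<tau>. valid \<sigma> \<tau> \<and> disc_value F \<alpha> = uvec \<sigma> \<tau> \<alpha>"
proof -
  let ?v = "disc_value F \<alpha>"
  obtain \<sigma> \<tau> where st: "valid \<sigma> \<tau>" "F (\<alpha> *\<^sub>R ?v) = cv \<sigma> \<tau> + Tm \<sigma> \<tau> *v (\<alpha> *\<^sub>R ?v)"
    using F_policy by blast
  have "?v = cv \<sigma> \<tau> + \<alpha> *\<^sub>R (Tm \<sigma> \<tau> *v ?v)"
    using disc_value_fix[OF assms] st(2) by (simp add: matrix_scaleR_vector_ac scaleR_matrix_vector_assoc[symmetric])
  then show ?thesis using uvec_unique[OF assms] st(1) by blast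
qed

definition opt :: "('n \<Rightarrow> 'm) \<Rightarrow> ('n \<Rightarrow> 'q) \<Rightarrow> real \<Rightarrow> bool" where
  "opt \<sigma> \<tau> \<alpha> \<longleftrightarrow> F (\<alpha> *\<^sub>R uvec \<sigma> \<tau> \<alpha>) = uvec \<sigma> \<tau> \<alpha>"

lemma polyfun_if: "polyfun f \<Longrightarrow> polyfun g \<Longrightarrow> polyfun (\<lambda>x. if b then f x else g x)"
  by (cases b) simp_all

lemma polyfun_Mat: "polyfun (\<lambda>\<alpha>. Mat \<sigma> \<tau> \<alpha> $ i $ j)"
proof -
  have "Mat \<sigma> \<tau> \<alpha> $ i $ j = (if i = j then 1 else 0) - \<alpha> * Tm \<sigma> \<tau> $ i $ j" for \<alpha>
    by (simp add: Mat_def mat_def)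
  then show ?thesis by (simp add: polyfun_diff polyfun_mult)
qed

lemma ratf_uvec: "ratf (\<lambda>\<alpha>. uvec \<sigma> \<tau> \<alpha> $ k)"
proof -
  have "ratf (\<lambda>\<alpha>. det (\<chi> i j. if j = k then cv \<sigma> \<tau> $ i else Mat \<sigma> \<tau> \<alpha> $ i $ j) / det (Mat \<sigma> \<tau> \<alpha>))"
  proof (rule ratf_polyfun_div)
    show "polyfun (\<lambda>\<alpha>. det (\<chi> i j. if j = k then cv \<sigma> \<tau> $ i else Mat \<sigma> \<tau> \<alpha> $ i $ j))"
      by (rule polyfun_det) (simp add: polyfun_Mat polyfun_if)
    show "polyfun (\<lambda>\<alpha>. det (Mat \<sigma> \<tau> \<alpha>))"
      by (rule polyfun_det) (simp add: polyfun_Mat)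
    show "det (Mat \<sigma> \<tau> 0) \<noteq> 0" by (rule det_Mat_nz) auto
  qed
  then show ?thesis unfolding uvec_def by simp
qed

lemma ratf_F_uvec: "ratf (\<lambda>\<alpha>. F (\<alpha> *\<^sub>R uvec \<sigma> \<tau> \<alpha>) $ j)"
proof -
  have e: "(P *v (\<alpha> *\<^sub>R u))$h = (\<Sum>l\<in>UNIV. P$h$l * (\<alpha> * u$l))" for \<alpha> u h
    by (simp add: matrix_vector_mult_def)
  show ?thesis
    unfolding F_def vec_lambda_beta e
    by (intro ratf_Min ratf_Max ratf_add ratf_sum ratf_mult ratf_uvec ratf_const ratf_id)
       (auto simp: Is_ne Hs_ne)
qed

lemma opt_decided:
  "(\<forall>\<^sub>F \<alpha> in at_left 1. opt \<sigma> \<tau> \<alpha>) \<or> (\<forall>\<^sub>F \<alpha> in at_left 1. \<not> opt \<sigma> \<tau> \<alpha>)"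
proof (cases "\<forall>j. \<forall>\<^sub>F \<alpha> in at_left 1. F (\<alpha> *\<^sub>R uvec \<sigma> \<tau> \<alpha>) $ j = uvec \<sigma> \<tau> \<alpha> $ j")
  case True
  then have "\<forall>\<^sub>F \<alpha> in at_left 1. \<forall>j. F (\<alpha> *\<^sub>R uvec \<sigma> \<tau> \<alpha>) $ j = uvec \<sigma> \<tau> \<alpha> $ j"
    by (intro eventually_all_finite) (use True in blast)
  then have "\<forall>\<^sub>F \<alpha> in at_left 1. opt \<sigma> \<tau> \<alpha>"
    by (rule eventually_mono) (simp add: opt_def vec_eq_iff)
  then show ?thesis ..
next
  case False
  then obtain j where j: "\<not> (\<forall>\<^sub>F \<alpha> in at_left 1. F (\<alpha> *\<^sub>R uvec \<sigma> \<tau> \<alpha>) $ j = uvec \<sigma> \<tau> \<alpha> $ j)" by blast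
  then have "\<forall>\<^sub>F \<alpha> in at_left 1. F (\<alpha> *\<^sub>R uvec \<sigma> \<tau> \<alpha>) $ j \<noteq> uvec \<sigma> \<tau> \<alpha> $ j"
    using ratf_eq_decided[OF ratf_F_uvec ratf_uvec, of \<sigma> \<tau> j \<sigma> \<tau> j] by blast
  then have "\<forall>\<^sub>F \<alpha> in at_left 1. \<not> opt \<sigma> \<tau> \<alpha>"
    by (rule eventually_mono) (auto simp: opt_def)
  then show ?thesis ..
qed

lemma ev_gt0: "\<forall>\<^sub>F x in at_left (1::real). 0 < x"
  using eventually_at_left_real[of 0 1] by (rule eventually_mono) auto

lemma blackwell_policy:
  "\<exists>\<sigma> \<tau>. valid \<sigma> \<tau> \<and> (\<forall>\<^sub>F \<alpha> in at_left 1. disc_value F \<alpha> = uvec \<sigma> \<tau> \<alpha>)"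
proof (rule ccontr)
  assume H: "\<not> ?thesis"
  let ?V = "{(\<sigma>, \<tau>). valid \<sigma> \<tau>}"
  have "\<forall>st\<in>?V. \<forall>\<^sub>F \<alpha> in at_left 1. \<not> opt (fst st) (snd st) \<alpha>"
  proof
    fix st assume st: "st \<in> ?V"
    obtain \<sigma> \<tau> where st': "st = (\<sigma>, \<tau>)" "valid \<sigma> \<tau>" using st by auto
    have "\<not> (\<forall>\<^sub>F \<alpha> in at_left 1. opt \<sigma> \<tau> \<alpha>)"
    proof
      assume "\<forall>\<^sub>F \<alpha> in at_left 1. opt \<sigma> \<tau> \<alpha>"
      then have "\<forall>\<^sub>F \<alpha> in at_left 1. disc_value F \<alpha> = uvec \<sigma> \<tau> \<alpha>"
        using ev_gt0 ev_lt1
        by eventually_elim (rule disc_value_eq, auto simp: opt_def)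
      then show False using H st'(2) by blast
    qed
    then show "\<forall>\<^sub>F \<alpha> in at_left 1. \<not> opt (fst st) (snd st) \<alpha>" using opt_decided[of \<sigma> \<tau>] st' by auto
  qed
  then have "\<forall>\<^sub>F \<alpha> in at_left 1. \<forall>st\<in>?V. \<not> opt (fst st) (snd st) \<alpha>"
    by (intro eventually_ball_finite) auto
  then have "\<forall>\<^sub>F \<alpha> in at_left (1::real). False"
    using ev_gt0 ev_lt1
  proof eventually_elim
    case (elim \<alpha>)
    then obtain \<sigma> \<tau> where "valid \<sigma> \<tau>" "disc_value F \<alpha> = uvec \<sigma> \<tau> \<alpha>"
      using disc_policy[of \<alpha>] by auto
    moreover have "opt \<sigma> \<tau> \<alpha>" unfolding opt_def
      using disc_value_fix[of \<alpha>] elim calculation by simp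
    ultimately show False using elim(1) by auto
  qed
  then show False by simp
qed

end


lemma cont_left: "isCont g (x::real) \<Longrightarrow> (g \<longlongrightarrow> g x) (at_left x)"
  by (rule tendsto_mono[OF at_le isContD]) auto

lemma ev_poly_nz1: fixes q1 :: "real poly" assumes "poly q1 1 \<noteq> 0"
  shows "\<forall>\<^sub>F x in at_left 1. poly q1 x \<noteq> 0"
proof -
  have "((\<lambda>x. poly q1 x) \<longlongrightarrow> poly q1 1) (at_left 1)" by (rule cont_left) simp
  then show ?thesis using assms by (rule tendsto_imp_eventually_ne)
qed

lemma lim_aux1: fixes q1 :: "real poly" assumes "poly q1 1 \<noteq> 0"
  shows "((\<lambda>x. (x - 1)^(n::nat) * poly p1 x / poly q1 x) \<longlongrightarrow> (1 - 1)^n * poly p1 1 / poly q1 1) (at_left 1)"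
  by (rule cont_left) (use assms in \<open>intro continuous_intros\<close>)

lemma lim_aux2: "((\<lambda>x. B * (\<bar>x - 1\<bar>^k * \<bar>poly q1 x\<bar>)) \<longlongrightarrow> B * (\<bar>1 - 1\<bar>^k * \<bar>poly q1 (1::real)\<bar>)) (at_left 1)"
  by (rule cont_left) (intro continuous_intros)

lemma lim_aux3: "((\<lambda>x. \<bar>poly p1 x\<bar>) \<longlongrightarrow> \<bar>poly p1 (1::real)\<bar>) (at_left 1)"
  by (rule cont_left) (intro continuous_intros)

lemma ratf_bounded_conv:
  assumes "ratf f" "\<forall>\<^sub>F x in at_left 1. \<bar>f x\<bar> \<le> B"
  shows "\<exists>L. (f \<longlongrightarrow> L) (at_left 1)"
proof -
  obtain p q where q: "q \<noteq> 0" and e: "\<forall>\<^sub>F x in at_left 1. f x = poly p x / poly q x"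
    using assms(1) unfolding ratf_def by blast
  show ?thesis
  proof (cases "p = 0")
    case True
    have "\<forall>\<^sub>F x in at_left 1. f x = 0" using e by (rule eventually_mono) (simp add: True)
    then have "(f \<longlongrightarrow> 0) (at_left 1)" by (rule tendsto_eventually)
    then show ?thesis ..
  next
    case False
    obtain p1 a where p1: "p = [:-1,1:] ^ a * p1" "\<not> [:-1,1:] dvd p1"
      using order_decomp[OF False, of 1] by auto
    obtain q1 b where q1: "q = [:-1,1:] ^ b * q1" "\<not> [:-1,1:] dvd q1"
      using order_decomp[OF q, of 1] by auto
    have p11: "poly p1 1 \<noteq> 0" using p1(2) poly_eq_0_iff_dvd[of p1 1] by simp
    have q11: "poly q1 1 \<noteq> 0" using q1(2) poly_eq_0_iff_dvd[of q1 1] by simp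
    have pp: "poly p x = (x - 1)^a * poly p1 x" for x unfolding p1(1) by (simp add: poly_power)
    have qq: "poly q x = (x - 1)^b * poly q1 x" for x unfolding q1(1) by (simp add: poly_power)
    have ev_ne: "\<forall>\<^sub>F x in at_left 1. x \<noteq> (1::real)" using ev_lt1 by (rule eventually_mono) simp
    have ev_q1: "\<forall>\<^sub>F x in at_left 1. poly q1 x \<noteq> 0" by (rule ev_poly_nz1[OF q11])
    show ?thesis
    proof (cases "b \<le> a")
      case True
      define k where "k = a - b"
      have ak: "a = k + b" using True by (simp add: k_def)
      let ?g = "\<lambda>x. (x - 1)^k * poly p1 x / poly q1 x"
      have "\<forall>\<^sub>F x in at_left 1. f x = ?g x"
        using e ev_ne ev_q1
      proof eventually_elim
        case (elim x)
        have nz: "(x - 1)^b \<noteq> 0" using elim(2) by simp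
        have "f x = ((x - 1)^k * poly p1 x * (x - 1)^b) / (poly q1 x * (x - 1)^b)"
          using elim(1) unfolding pp qq ak power_add by (simp add: ac_simps)
        also have "\<dots> = ?g x" using nz by (rule mult_divide_mult_cancel_right)
        finally show ?case .
      qed
      moreover have "(?g \<longlongrightarrow> (1 - 1)^k * poly p1 1 / poly q1 1) (at_left 1)"
        by (rule lim_aux1[OF q11])
      ultimately have "(f \<longlongrightarrow> (1 - 1)^k * poly p1 1 / poly q1 1) (at_left 1)"
        by (rule tendsto_cong[THEN iffD2])
      then show ?thesis ..
    next
      case False
      define k where "k = b - a"
      have k: "k \<ge> 1" "b = a + k" using False by (auto simp: k_def)
      have id: "\<forall>\<^sub>F x in at_left 1. \<bar>poly p1 x\<bar> = \<bar>f x\<bar> * (\<bar>x - 1\<bar>^k * \<bar>poly q1 x\<bar>)"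
        using e ev_ne ev_q1
      proof eventually_elim
        case (elim x)
        have nz: "(x - 1)^a \<noteq> 0" using elim(2) by simp
        have nz2: "(x - 1)^k * poly q1 x \<noteq> 0" using elim(2,3) by simp
        have "f x = (poly p1 x * (x - 1)^a) / (((x - 1)^k * poly q1 x) * (x - 1)^a)"
          using elim(1) unfolding pp qq k(2) power_add by (simp add: ac_simps)
        also have "\<dots> = poly p1 x / ((x - 1)^k * poly q1 x)" using nz by (rule mult_divide_mult_cancel_right)
        finally have "f x * ((x - 1)^k * poly q1 x) = poly p1 x" using nz2 by simp
        then have "\<bar>poly p1 x\<bar> = \<bar>f x * ((x - 1)^k * poly q1 x)\<bar>" by simp
        then show ?case by (simp only: abs_mult power_abs)
      qed
      have ub: "\<forall>\<^sub>F x in at_left 1. \<bar>poly p1 x\<bar> \<le> B * (\<bar>x - 1\<bar>^k * \<bar>poly q1 x\<bar>)"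
        using id assms(2)
      proof eventually_elim
        case (elim x)
        have "\<bar>f x\<bar> * (\<bar>x - 1\<bar>^k * \<bar>poly q1 x\<bar>) \<le> B * (\<bar>x - 1\<bar>^k * \<bar>poly q1 x\<bar>)"
          using elim(2) by (rule mult_right_mono) simp
        then show ?case using elim(1) by simp
      qed
      have z: "B * (\<bar>1 - 1\<bar>^k * \<bar>poly q1 (1::real)\<bar>) = 0" using k(1) by simp
      have lim0: "((\<lambda>x. B * (\<bar>x - 1\<bar>^k * \<bar>poly q1 x\<bar>)) \<longlongrightarrow> 0) (at_left 1)"
        using lim_aux2[of B k q1] unfolding z .
      have "((\<lambda>x. \<bar>poly p1 x\<bar>) \<longlongrightarrow> 0) (at_left 1)"
        by (rule tendsto_sandwich[OF _ ub tendsto_const lim0]) simp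
      then have "\<bar>poly p1 1\<bar> = 0"
        using tendsto_unique[OF trivial_limit_at_left_real lim_aux3[of p1]] by blast
      then show ?thesis using p11 by simp
    qed
  qed
qed


definition stoch :: "real^'n^'n \<Rightarrow> bool" where
  "stoch T \<longleftrightarrow> (\<forall>j l. T$j$l \<ge> 0) \<and> (\<forall>j. (\<Sum>l\<in>UNIV. T$j$l) = 1)"

definition closedset :: "real^'n^'n \<Rightarrow> 'n set \<Rightarrow> bool" where
  "closedset T C \<longleftrightarrow> (\<forall>j\<in>C. \<forall>l. T$j$l > 0 \<longrightarrow> l \<in> C)"

lemma mult_1_diff: "\<And>t::real. \<alpha> * t - t = - ((1 - \<alpha>) * t)" by (simp add: algebra_simps)

lemma stoch_lower:
  assumes "stoch T" "closedset T C" "j \<in> C" "\<And>l. l \<in> C \<Longrightarrow> v$l \<ge> a"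
  shows "(T *v v)$j \<ge> a"
proof -
  have "(\<Sum>l\<in>UNIV. T$j$l * a) \<le> (\<Sum>l\<in>UNIV. T$j$l * v$l)"
  proof (rule sum_mono)
    fix l
    show "T$j$l * a \<le> T$j$l * v$l"
    proof (cases "T$j$l > 0")
      case True
      then have "l \<in> C" using assms(2,3) unfolding closedset_def by blast
      then show ?thesis using True assms(4) by (simp add: mult_left_mono)
    next
      case False
      have "T$j$l \<ge> 0" using assms(1) unfolding stoch_def by blast
      then have "T$j$l = 0" using False by linarith
      then show ?thesis by simp
    qed
  qed
  then show ?thesis using assms(1) unfolding stoch_def
    by (simp add: matrix_vector_mult_def sum_distrib_right[symmetric])
qed

lemma stoch_upper:
  assumes "stoch T" "closedset T C" "j \<in> C" "\<And>l. l \<in> C \<Longrightarrow> v$l \<le> a"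
  shows "(T *v v)$j \<le> a"
proof -
  have "(T *v (-v))$j \<ge> -a" by (rule stoch_lower[OF assms(1-3)]) (use assms(4) in simp)
  then show ?thesis by (simp add: matrix_vector_mult_def sum_negf)
qed

lemma mp_abstract:
  fixes T :: "real^'n^'n"
  assumes T: "stoch T" and C: "closedset T C" "C \<noteq> {}" and a: "0 \<le> \<alpha>" "\<alpha> < 1"
    and e: "\<And>j. e$j = \<alpha> * (T *v e)$j - (1 - \<alpha>) * (T *v v)$j"
    and v: "\<And>j. j \<in> C \<Longrightarrow> v$j \<ge> \<epsilon>"
    and j0: "j0 \<in> C"
  shows "e$j0 \<le> - \<epsilon>"
proof -
  let ?\<mu> = "Max ((\<lambda>j. e$j) ` C)"
  have fin: "finite C" by simp
  have "?\<mu> \<in> (\<lambda>j. e$j) ` C" by (rule Max_in) (use C in auto)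
  then obtain j1 where j1: "j1 \<in> C" "?\<mu> = e$j1" by blast
  have le: "e$l \<le> ?\<mu>" if "l \<in> C" for l by (rule Max_ge) (use that in auto)
  have "(T *v e)$j1 \<le> ?\<mu>" by (rule stoch_upper[OF T C(1) j1(1)]) (rule le)
  moreover have "(T *v v)$j1 \<ge> \<epsilon>" by (rule stoch_lower[OF T C(1) j1(1)]) (rule v)
  ultimately have "\<alpha> * (T *v e)$j1 \<le> \<alpha> * ?\<mu>" "(1 - \<alpha>) * \<epsilon> \<le> (1 - \<alpha>) * (T *v v)$j1"
    using a by (auto intro: mult_left_mono)
  then have "?\<mu> \<le> \<alpha> * ?\<mu> - (1 - \<alpha>) * \<epsilon>"
    using e[of j1] j1(2) by linarith
  then have "(1 - \<alpha>) * ?\<mu> \<le> (1 - \<alpha>) * (- \<epsilon>)" by (simp add: algebra_simps)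
  then have "?\<mu> \<le> - \<epsilon>" by (rule mult_left_le_imp_le) (use a in auto)
  then show ?thesis using le[OF j0] by simp
qed

locale game_bias = game Is Hs cc P W
  for Is :: "'n::finite \<Rightarrow> 'm::finite set" and Hs :: "'m \<Rightarrow> 'q::finite set"
    and cc P W +
  fixes v0 :: "real^'n" and lam :: real
  assumes bias0: "F v0 = (\<chi> i. lam + v0$i)"
begin

lemma lam_eq: "ergodic_const F = lam" by (rule erg_unique[OF bias0])

lemma lam_bound: "\<bar>lam\<bar> \<le> W" by (rule erg_bound[OF bias0])

definition pol where
  "pol = (SOME st. valid (fst st) (snd st) \<and> (\<forall>\<^sub>F \<alpha> in at_left 1. disc_value F \<alpha> = uvec (fst st) (snd st) \<alpha>))"

definition "\<sigma>0 = fst pol"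
definition "\<tau>0 = snd pol"

lemma pol_props: "valid \<sigma>0 \<tau>0" "\<forall>\<^sub>F \<alpha> in at_left 1. disc_value F \<alpha> = uvec \<sigma>0 \<tau>0 \<alpha>"
proof -
  have "\<exists>st. valid (fst st) (snd st) \<and> (\<forall>\<^sub>F \<alpha> in at_left 1. disc_value F \<alpha> = uvec (fst st) (snd st) \<alpha>)"
    using blackwell_policy by auto
  then have "valid (fst pol) (snd pol) \<and> (\<forall>\<^sub>F \<alpha> in at_left 1. disc_value F \<alpha> = uvec (fst pol) (snd pol) \<alpha>)"
    unfolding pol_def by (rule someI_ex)
  then show "valid \<sigma>0 \<tau>0" "\<forall>\<^sub>F \<alpha> in at_left 1. disc_value F \<alpha> = uvec \<sigma>0 \<tau>0 \<alpha>"
    unfolding \<sigma>0_def \<tau>0_def by auto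
qed

definition w :: "real \<Rightarrow> real^'n" where
  "w \<alpha> = disc_value F \<alpha> - (\<chi> i. lam / (1 - \<alpha>))"

lemma w_fix:
  assumes "0 \<le> \<alpha>" "\<alpha> < 1"
  shows "w \<alpha> $ j = F (\<alpha> *\<^sub>R w \<alpha>) $ j - lam"
proof -
  let ?d = "disc_value F \<alpha>"
  let ?t = "lam / (1 - \<alpha>)"
  have eq: "\<alpha> *\<^sub>R ?d = (\<chi> i. (\<alpha> *\<^sub>R w \<alpha>)$i + \<alpha> * ?t)"
    by (simp add: vec_eq_iff w_def algebra_simps)
  have "F (\<alpha> *\<^sub>R ?d) $ j = F (\<chi> i. (\<alpha> *\<^sub>R w \<alpha>)$i + \<alpha> * ?t) $ j" by (simp only: eq)
  also have "\<dots> = F (\<alpha> *\<^sub>R w \<alpha>) $ j + \<alpha> * ?t" by (rule F_shift)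
  finally have "F (\<alpha> *\<^sub>R ?d) $ j = F (\<alpha> *\<^sub>R w \<alpha>) $ j + \<alpha> * ?t" .
  then have "?d $ j = F (\<alpha> *\<^sub>R w \<alpha>) $ j + \<alpha> * ?t" using disc_value_fix[OF assms] by metis
  moreover have "\<alpha> * ?t - ?t = - ((1 - \<alpha>) * ?t)" by (rule mult_1_diff)
  moreover have "(1 - \<alpha>) * ?t = lam" using assms by simp
  ultimately show ?thesis by (simp add: w_def)
qed

lemma w_bound:
  assumes "0 \<le> \<alpha>" "\<alpha> < 1"
  shows "\<bar>w \<alpha> $ j\<bar> \<le> 2 * snorm v0"
proof -
  let ?s = "snorm (w \<alpha> - v0)"
  have v0j: "v0 $ i = F v0 $ i - lam" for i using bias0 by (simp add: vec_eq_iff)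
  have "snorm (\<alpha> *\<^sub>R w \<alpha> - v0) \<le> \<alpha> * ?s + (1 - \<alpha>) * snorm v0"
  proof (rule snorm_le)
    fix i
    have "(\<alpha> *\<^sub>R w \<alpha> - v0)$i = \<alpha> * (w \<alpha> - v0)$i - (1 - \<alpha>) * v0$i" by (simp add: algebra_simps)
    moreover have "\<bar>\<alpha> * (w \<alpha> - v0)$i - (1 - \<alpha>) * v0$i\<bar> \<le> \<bar>\<alpha> * (w \<alpha> - v0)$i\<bar> + \<bar>(1 - \<alpha>) * v0$i\<bar>"
      by (rule abs_triangle_ineq4)
    moreover have "\<bar>\<alpha> * (w \<alpha> - v0)$i\<bar> = \<alpha> * \<bar>(w \<alpha> - v0)$i\<bar>" "\<bar>(1 - \<alpha>) * v0$i\<bar> = (1 - \<alpha>) * \<bar>v0$i\<bar>"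
      using assms by (simp_all add: abs_mult)
    ultimately have "\<bar>(\<alpha> *\<^sub>R w \<alpha> - v0)$i\<bar> \<le> \<alpha> * \<bar>(w \<alpha> - v0)$i\<bar> + (1 - \<alpha>) * \<bar>v0$i\<bar>"
      by simp
    also have "\<dots> \<le> \<alpha> * ?s + (1 - \<alpha>) * snorm v0"
      using assms snorm_ge[of "w \<alpha> - v0" i] snorm_ge[of v0 i]
      by (intro add_mono mult_left_mono) auto
    finally show "\<bar>(\<alpha> *\<^sub>R w \<alpha> - v0)$i\<bar> \<le> \<alpha> * ?s + (1 - \<alpha>) * snorm v0" .
  qed
  moreover have "?s \<le> snorm (\<alpha> *\<^sub>R w \<alpha> - v0)"
  proof (rule snorm_le)
    fix i
    have "\<bar>(w \<alpha> - v0)$i\<bar> = \<bar>F (\<alpha> *\<^sub>R w \<alpha>) $ i - F v0 $ i\<bar>"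
      using w_fix[OF assms, of i] v0j[of i] by simp
    also have "\<dots> \<le> snorm (\<alpha> *\<^sub>R w \<alpha> - v0)" by (rule F_nonexp)
    finally show "\<bar>(w \<alpha> - v0)$i\<bar> \<le> snorm (\<alpha> *\<^sub>R w \<alpha> - v0)" .
  qed
  ultimately have "?s \<le> \<alpha> * ?s + (1 - \<alpha>) * snorm v0" by linarith
  then have "(1 - \<alpha>) * ?s \<le> (1 - \<alpha>) * snorm v0" by (simp add: algebra_simps)
  then have "?s \<le> snorm v0" using assms by simp
  moreover have "\<bar>w \<alpha> $ j\<bar> \<le> \<bar>(w \<alpha> - v0) $ j\<bar> + \<bar>v0 $ j\<bar>" by simp
  ultimately show ?thesis using snorm_ge[of "w \<alpha> - v0" j] snorm_ge[of v0 j] by linarith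
qed

lemma w_ratf: "ratf (\<lambda>\<alpha>. w \<alpha> $ j)"
proof -
  have r: "ratf (\<lambda>\<alpha>. uvec \<sigma>0 \<tau>0 \<alpha> $ j - lam / (1 - \<alpha>))"
    by (intro ratf_diff ratf_uvec ratf_polyfun_div[of "\<lambda>\<alpha>. lam" "\<lambda>\<alpha>. 1 - \<alpha>" 0]) (auto intro: polyfun_diff)
  show ?thesis
    by (rule ratf_cong[OF r]) (use pol_props(2) in \<open>rule eventually_mono, simp add: w_def\<close>)
qed

lemma ev_unit: "\<forall>\<^sub>F \<alpha> in at_left (1::real). 0 \<le> \<alpha> \<and> \<alpha> < 1"
  using ev_gt0 ev_lt1 by eventually_elim simp

definition vstar :: "real^'n" where
  "vstar = (\<chi> j. Lim (at_left 1) (\<lambda>\<alpha>. w \<alpha> $ j))"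

lemma w_tendsto: "(w \<longlongrightarrow> vstar) (at_left 1)"
proof (rule vec_tendstoI)
  fix j
  have "\<forall>\<^sub>F \<alpha> in at_left 1. \<bar>w \<alpha> $ j\<bar> \<le> 2 * snorm v0"
    using ev_unit by (rule eventually_mono) (auto intro: w_bound)
  then obtain L where L: "((\<lambda>\<alpha>. w \<alpha> $ j) \<longlongrightarrow> L) (at_left 1)"
    using ratf_bounded_conv[OF w_ratf] by blast
  then have "Lim (at_left 1) (\<lambda>\<alpha>. w \<alpha> $ j) = L" by (intro tendsto_Lim) auto
  then show "((\<lambda>\<alpha>. w \<alpha> $ j) \<longlongrightarrow> vstar $ j) (at_left 1)" using L by (simp add: vstar_def)
qed

lemma blackwell_eq: "blackwell_bias F = vstar"
  unfolding blackwell_bias_def lam_eq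
  by (rule tendsto_Lim) (use w_tendsto[unfolded w_def] in auto)

lemma vstar_bias: "F vstar = (\<chi> i. lam + vstar$i)"
proof -
  have lim1: "((\<lambda>\<alpha>. \<alpha> *\<^sub>R w \<alpha>) \<longlongrightarrow> 1 *\<^sub>R vstar) (at_left 1)"
    by (intro tendsto_scaleR w_tendsto tendsto_ident_at)
  have "F vstar $ j = lam + vstar $ j" for j
  proof -
    have a: "((\<lambda>\<alpha>. F (\<alpha> *\<^sub>R w \<alpha>) $ j) \<longlongrightarrow> F vstar $ j) (at_left 1)"
      using tendsto_vec_nth[OF F_tendsto[OF lim1]] by simp
    have b: "((\<lambda>\<alpha>. w \<alpha> $ j + lam) \<longlongrightarrow> vstar $ j + lam) (at_left 1)"
      by (intro tendsto_add tendsto_const tendsto_vec_nth w_tendsto)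
    have "\<forall>\<^sub>F \<alpha> in at_left 1. w \<alpha> $ j + lam = F (\<alpha> *\<^sub>R w \<alpha>) $ j"
      using ev_unit by (rule eventually_mono) (simp add: w_fix)
    then have "((\<lambda>\<alpha>. F (\<alpha> *\<^sub>R w \<alpha>) $ j) \<longlongrightarrow> vstar $ j + lam) (at_left 1)"
      using b by (rule tendsto_cong[THEN iffD1])
    then show ?thesis using tendsto_unique[OF trivial_limit_at_left_real a] by simp
  qed
  then show ?thesis by (simp add: vec_eq_iff)
qed

abbreviation "T0 \<equiv> Tm \<sigma>0 \<tau>0"
abbreviation "c0 \<equiv> cv \<sigma>0 \<tau>0"

lemma T0_stoch: "stoch T0"
  unfolding stoch_def Tm_def using P_nonneg P_stoch by simp

lemma T0_const: "(T0 *v (\<chi> i. t))$j = t"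
  using P_stoch by (simp add: Tm_def matrix_vector_mult_def sum_distrib_right[symmetric])

lemma w_chain:
  "\<forall>\<^sub>F \<alpha> in at_left 1. \<forall>j. w \<alpha> $ j = c0 $ j - lam + \<alpha> * (T0 *v w \<alpha>) $ j"
  using ev_unit pol_props(2)
proof eventually_elim
  case (elim \<alpha>)
  let ?t = "lam / (1 - \<alpha>)"
  have u: "uvec \<sigma>0 \<tau>0 \<alpha> = w \<alpha> + (\<chi> i. ?t)" using elim(2) by (simp add: w_def)
  have f1: "(T0 *v uvec \<sigma>0 \<tau>0 \<alpha>)$j = (T0 *v w \<alpha>)$j + ?t" for j
    unfolding u matrix_vector_right_distrib by (simp add: T0_const)
  have f2: "uvec \<sigma>0 \<tau>0 \<alpha> $ j = c0 $ j + \<alpha> * (T0 *v uvec \<sigma>0 \<tau>0 \<alpha>)$j" for j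
  proof -
    have "uvec \<sigma>0 \<tau>0 \<alpha> = c0 + \<alpha> *\<^sub>R (T0 *v uvec \<sigma>0 \<tau>0 \<alpha>)"
      using elim(1) by (intro uvec_eq) auto
    then have "uvec \<sigma>0 \<tau>0 \<alpha> $ j = (c0 + \<alpha> *\<^sub>R (T0 *v uvec \<sigma>0 \<tau>0 \<alpha>)) $ j" by (rule arg_cong)
    then show ?thesis by simp
  qed
  have f3: "\<alpha> * ?t - ?t = - lam"
  proof -
    have nz: "1 - \<alpha> \<noteq> 0" using elim(1) by simp
    have "\<alpha> * ?t - ?t = - ((1 - \<alpha>) * ?t)" by (rule mult_1_diff)
    moreover have "(1 - \<alpha>) * ?t = lam" using nz by simp
    ultimately show ?thesis by simp
  qed
  show ?case
  proof
    fix j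
    have "w \<alpha> $ j + ?t = c0 $ j + \<alpha> * ((T0 *v w \<alpha>)$j + ?t)" using f1[of j] f2[of j] u by simp
    then have "w \<alpha> $ j + ?t = c0 $ j + \<alpha> * (T0 *v w \<alpha>)$j + \<alpha> * ?t" by (simp add: ring_distribs)
    then show "w \<alpha> $ j = c0 $ j - lam + \<alpha> * (T0 *v w \<alpha>) $ j" using f3 by linarith
  qed
qed

lemma Tv_tendsto:
  fixes T :: "real^'n^'k" and f :: "'a \<Rightarrow> real^'n"
  assumes "(f \<longlongrightarrow> x) net"
  shows "((\<lambda>a. (T *v f a) $ j) \<longlongrightarrow> (T *v x) $ j) net"
  unfolding matrix_vector_mult_def vec_lambda_beta
  apply (rule tendsto_sum)
  apply (rule tendsto_mult_left)
  apply (rule tendsto_vec_nth)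
  apply (rule assms)
  done

lemma Tv_neg: fixes T :: "real^'n^'k" shows "(T *v (- v)) $ j = - (T *v v) $ j"
  by (simp add: matrix_vector_mult_def sum_negf[symmetric])

lemma vstar_chain: "vstar $ j = c0 $ j - lam + (T0 *v vstar) $ j"
proof -
  have a: "((\<lambda>\<alpha>. c0 $ j - lam + \<alpha> * (T0 *v w \<alpha>) $ j) \<longlongrightarrow> c0 $ j - lam + 1 * (T0 *v vstar) $ j) (at_left 1)"
    by (intro tendsto_add tendsto_mult tendsto_const tendsto_ident_at Tv_tendsto w_tendsto)
  have "\<forall>\<^sub>F \<alpha> in at_left 1. w \<alpha> $ j = c0 $ j - lam + \<alpha> * (T0 *v w \<alpha>) $ j"
    using w_chain by (rule eventually_mono) blast
  then have "((\<lambda>\<alpha>. w \<alpha> $ j) \<longlongrightarrow> c0 $ j - lam + 1 * (T0 *v vstar) $ j) (at_left 1)"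
    using a by (rule tendsto_cong[THEN iffD2])
  moreover have "((\<lambda>\<alpha>. w \<alpha> $ j) \<longlongrightarrow> vstar $ j) (at_left 1)" by (intro tendsto_vec_nth w_tendsto)
  ultimately have "vstar $ j = c0 $ j - lam + 1 * (T0 *v vstar) $ j"
    by (rule tendsto_unique[OF trivial_limit_at_left_real, rotated])
  then show ?thesis by simp
qed

lemma closed_min_le0:
  assumes C: "closedset T0 C" "C \<noteq> {}"
  shows "Min ((\<lambda>j. vstar $ j) ` C) \<le> 0"
proof (rule ccontr)
  assume "\<not> ?thesis"
  then have eps: "Min ((\<lambda>j. vstar $ j) ` C) > 0" by simp
  let ?\<epsilon> = "Min ((\<lambda>j. vstar $ j) ` C)"
  obtain j0 where j0: "j0 \<in> C" using C by blast
  have vge: "vstar $ j \<ge> ?\<epsilon>" if "j \<in> C" for j by (rule Min_le) (use that in auto)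
  have "\<forall>\<^sub>F \<alpha> in at_left 1. (w \<alpha> - vstar) $ j0 \<le> - ?\<epsilon>"
    using ev_unit w_chain
  proof eventually_elim
    case (elim \<alpha>)
    show ?case
    proof (rule mp_abstract[OF T0_stoch C _ _ _ vge j0])
      show "0 \<le> \<alpha>" "\<alpha> < 1" using elim by auto
      fix j
      have "(w \<alpha> - vstar) $ j = (c0 $ j - lam + \<alpha> * (T0 *v w \<alpha>) $ j) - (c0 $ j - lam + (T0 *v vstar) $ j)"
        using elim(2) vstar_chain[of j] by simp
      also have "\<dots> = \<alpha> * (T0 *v (w \<alpha> - vstar)) $ j - (1 - \<alpha>) * (T0 *v vstar) $ j"
        by (simp add: matrix_vector_mult_diff_distrib algebra_simps)
      finally show "(w \<alpha> - vstar) $ j = \<alpha> * (T0 *v (w \<alpha> - vstar)) $ j - (1 - \<alpha>) * (T0 *v vstar) $ j" .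
    qed
  qed
  then have "\<forall>\<^sub>F \<alpha> in at_left 1. w \<alpha> $ j0 \<le> vstar $ j0 - ?\<epsilon>" by (rule eventually_mono) simp
  then have "vstar $ j0 \<le> vstar $ j0 - ?\<epsilon>"
    by (rule tendsto_upperbound[OF tendsto_vec_nth[OF w_tendsto]]) simp
  then show False using eps by simp
qed

lemma closed_max_ge0:
  assumes C: "closedset T0 C" "C \<noteq> {}"
  shows "Max ((\<lambda>j. vstar $ j) ` C) \<ge> 0"
proof (rule ccontr)
  assume "\<not> ?thesis"
  then have eps: "- Max ((\<lambda>j. vstar $ j) ` C) > 0" by simp
  let ?\<epsilon> = "- Max ((\<lambda>j. vstar $ j) ` C)"
  obtain j0 where j0: "j0 \<in> C" using C by blast
  have vge: "(- vstar) $ j \<ge> ?\<epsilon>" if "j \<in> C" for j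
    using Max_ge[of "(\<lambda>j. vstar $ j) ` C" "vstar $ j"] that by auto
  have "\<forall>\<^sub>F \<alpha> in at_left 1. (vstar - w \<alpha>) $ j0 \<le> - ?\<epsilon>"
    using ev_unit w_chain
  proof eventually_elim
    case (elim \<alpha>)
    show ?case
    proof (rule mp_abstract[OF T0_stoch C _ _ _ vge j0])
      show "0 \<le> \<alpha>" "\<alpha> < 1" using elim by auto
      fix j
      have "(vstar - w \<alpha>) $ j = (c0 $ j - lam + (T0 *v vstar) $ j) - (c0 $ j - lam + \<alpha> * (T0 *v w \<alpha>) $ j)"
        using elim(2) vstar_chain[of j] by simp
      also have "\<dots> = \<alpha> * (T0 *v (vstar - w \<alpha>)) $ j - (1 - \<alpha>) * (T0 *v (- vstar)) $ j"
        by (simp add: matrix_vector_mult_diff_distrib Tv_neg algebra_simps)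
      finally show "(vstar - w \<alpha>) $ j = \<alpha> * (T0 *v (vstar - w \<alpha>)) $ j - (1 - \<alpha>) * (T0 *v (- vstar)) $ j" .
    qed
  qed
  then have "\<forall>\<^sub>F \<alpha> in at_left 1. w \<alpha> $ j0 \<ge> vstar $ j0 + ?\<epsilon>" by (rule eventually_mono) simp
  then have "vstar $ j0 + ?\<epsilon> \<le> vstar $ j0"
    by (rule tendsto_lowerbound[OF tendsto_vec_nth[OF w_tendsto]]) simp
  then show False using eps by simp
qed

end


locale mchain =
  fixes T :: "real^'n::finite^'n" and \<phi> :: "'n \<Rightarrow> 'q::finite" and N :: "'q set" and M :: real
    and S :: "'n set"
  assumes T_stoch: "stoch T"
    and rows: "\<phi> a = \<phi> x \<Longrightarrow> T$a = T$x"
    and lowb: "T$j$l > 0 \<Longrightarrow> T$j$l \<ge> (if \<phi> j \<in> N then 1 / M else 1)"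
    and M1: "M \<ge> 1"
begin

fun D :: "nat \<Rightarrow> 'n set" where
  "D 0 = S"
| "D (Suc k) = D k \<union> {a. \<exists>b\<in>D k. T$a$b > 0}"

lemma D_mono: "k \<le> k' \<Longrightarrow> D k \<subseteq> D k'"
  by (induction k' rule: dec_induct) auto

definition R :: "'n set" where "R = {x. \<exists>k. x \<in> D k}"

definition dist :: "'n \<Rightarrow> nat" where "dist x = (LEAST k. x \<in> D k)"

lemma dist_D: "x \<in> R \<Longrightarrow> x \<in> D (dist x)"
  unfolding R_def dist_def by (auto intro: LeastI)

lemma D_dist: "x \<in> D k \<Longrightarrow> dist x \<le> k"
  unfolding dist_def by (rule Least_le)

lemma in_D_iff: "x \<in> R \<Longrightarrow> x \<in> D k \<longleftrightarrow> dist x \<le> k"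
  using dist_D D_mono D_dist by blast

lemma R_D: "x \<in> D k \<Longrightarrow> x \<in> R"
  unfolding R_def by blast

lemma dist0: "x \<in> R \<Longrightarrow> dist x = 0 \<longleftrightarrow> x \<in> S"
  using in_D_iff[of x 0] by auto

lemma edge_dist:
  assumes "y \<in> R" "T$a$y > 0"
  shows "a \<in> R \<and> dist a \<le> Suc (dist y)"
proof -
  have "a \<in> D (Suc (dist y))" using dist_D[OF assms(1)] assms(2) by auto
  then show ?thesis using R_D D_dist by blast
qed

lemma dist_succ:
  assumes "a \<in> R" "dist a = Suc k"
  shows "\<exists>b. b \<in> R \<and> T$a$b > 0 \<and> dist b = k"
proof -
  have a1: "a \<in> D (Suc k)" using dist_D[OF assms(1)] assms(2) by simp
  have a2: "a \<notin> D k" using in_D_iff[OF assms(1), of k] assms(2) by simp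
  obtain b where b: "b \<in> D k" "T$a$b > 0" using a1 a2 by auto
  have bR: "b \<in> R" using b(1) by (rule R_D)
  have "dist b \<le> k" using b(1) by (rule D_dist)
  moreover have "dist a \<le> Suc (dist b)" using edge_dist[OF bR b(2)] by simp
  ultimately show ?thesis using bR b(2) assms(2) by (intro exI[of _ b]) auto
qed

lemma phi_new:
  assumes "a \<in> R" "dist a = Suc k" "x \<in> R" "1 \<le> dist x" "dist x \<le> k"
  shows "\<phi> a \<noteq> \<phi> x"
proof
  assume eq: "\<phi> a = \<phi> x"
  obtain j where j: "dist x = Suc j" using assms(4) by (cases "dist x") auto
  obtain y where y: "y \<in> R" "T$x$y > 0" "dist y = j" using dist_succ[OF assms(3) j] by blast
  have "T$a$y > 0" using y(2) rows[OF eq] by simp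
  then have "dist a \<le> Suc j" using edge_dist[OF y(1)] y(3) by simp
  then show False using assms(2,5) j by simp
qed

inductive wpath :: "'n \<Rightarrow> nat \<Rightarrow> real \<Rightarrow> bool" where
  base: "a \<in> S \<Longrightarrow> wpath a 0 1"
| step: "T$a$b \<ge> p \<Longrightarrow> p > 0 \<Longrightarrow> wpath b r d \<Longrightarrow> wpath a (Suc r) (p * d)"

definition Lv :: "nat \<Rightarrow> 'n set" where
  "Lv k = {x \<in> R. 1 \<le> dist x \<and> dist x \<le> k}"

lemma Lv_mono: "k \<le> k' \<Longrightarrow> Lv k \<subseteq> Lv k'"
  unfolding Lv_def by auto

lemma wpath_exists:
  assumes "a \<in> R" "dist a = k"
  shows "\<exists>d. wpath a k d \<and> d \<ge> (1 / M) ^ card (N \<inter> \<phi> ` Lv k)"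
  using assms
proof (induction k arbitrary: a)
  case 0
  then have "a \<in> S" using dist0 by simp
  moreover have "Lv 0 = {}" by (auto simp: Lv_def)
  ultimately show ?case by (intro exI[of _ 1]) (auto intro: wpath.base)
next
  case (Suc k)
  obtain b where b: "b \<in> R" "T$a$b > 0" "dist b = k" using dist_succ[OF Suc.prems] by blast
  obtain d where d: "wpath b k d" "d \<ge> (1 / M) ^ card (N \<inter> \<phi> ` Lv k)" using Suc.IH[OF b(1) b(3)] by blast
  define p where "p = (if \<phi> a \<in> N then 1 / M else 1)"
  have p0: "p > 0" using M1 by (simp add: p_def)
  have pT: "T$a$b \<ge> p" using lowb[OF b(2)] by (simp add: p_def)
  have wp: "wpath a (Suc k) (p * d)" by (rule wpath.step[OF pT p0 d(1)])
  have M0: "0 < 1 / M" "1 / M \<le> 1" using M1 by auto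
  have aL: "a \<in> Lv (Suc k)" using Suc.prems unfolding Lv_def by auto
  have anew: "\<phi> a \<notin> \<phi> ` Lv k" using phi_new[OF Suc.prems] unfolding Lv_def by auto
  have fin: "finite (N \<inter> \<phi> ` Lv (Suc k))" by simp
  have sub: "N \<inter> \<phi> ` Lv k \<subseteq> N \<inter> \<phi> ` Lv (Suc k)" using Lv_mono[of k "Suc k"] by auto
  show ?case
  proof (intro exI[of _ "p * d"] conjI wp)
    show "(1 / M) ^ card (N \<inter> \<phi> ` Lv (Suc k)) \<le> p * d"
    proof (cases "\<phi> a \<in> N")
      case True
      have "insert (\<phi> a) (N \<inter> \<phi> ` Lv k) \<subseteq> N \<inter> \<phi> ` Lv (Suc k)" using sub True aL by auto
      then have "card (insert (\<phi> a) (N \<inter> \<phi> ` Lv k)) \<le> card (N \<inter> \<phi> ` Lv (Suc k))"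
        by (rule card_mono[OF fin])
      then have c: "Suc (card (N \<inter> \<phi> ` Lv k)) \<le> card (N \<inter> \<phi> ` Lv (Suc k))" using anew by simp
      have "(1 / M) ^ card (N \<inter> \<phi> ` Lv (Suc k)) \<le> (1 / M) ^ Suc (card (N \<inter> \<phi> ` Lv k))"
        by (rule power_decreasing[OF c]) (use M0 in auto)
      also have "\<dots> = p * (1 / M) ^ card (N \<inter> \<phi> ` Lv k)" using True by (simp add: p_def)
      also have "\<dots> \<le> p * d" using d(2) p0 by (simp add: mult_left_mono)
      finally show ?thesis .
    next
      case False
      have c: "card (N \<inter> \<phi> ` Lv k) \<le> card (N \<inter> \<phi> ` Lv (Suc k))" by (rule card_mono[OF fin sub])
      have "(1 / M) ^ card (N \<inter> \<phi> ` Lv (Suc k)) \<le> (1 / M) ^ (card (N \<inter> \<phi> ` Lv k))"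
        by (rule power_decreasing[OF c]) (use M0 in auto)
      also have "\<dots> \<le> p * d" using d(2) False by (simp add: p_def)
      finally show ?thesis .
    qed
  qed
qed

lemma levels_nonempty:
  assumes "a \<in> R" "dist a = k" "j \<le> k"
  shows "\<exists>x\<in>R. dist x = j"
  using assms
proof (induction k arbitrary: a)
  case 0 then show ?case by auto
next
  case (Suc k)
  show ?case
  proof (cases "j = Suc k")
    case True then show ?thesis using Suc.prems by blast
  next
    case False
    obtain b where "b \<in> R" "dist b = k" using dist_succ[OF Suc.prems(1,2)] by blast
    then show ?thesis using Suc.IH[of b] Suc.prems(3) False by simp
  qed
qed

lemma dist_bound:
  assumes "a \<in> R"
  shows "dist a \<le> CARD('n) - 1"
proof -
  let ?k = "dist a"
  define f where "f j = (SOME x. x \<in> R \<and> dist x = j)" for j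
  have f: "f j \<in> R \<and> dist (f j) = j" if "j \<le> ?k" for j
    unfolding f_def using levels_nonempty[OF assms refl that] by (rule_tac someI_ex) blast
  have "inj_on f {0..?k}" by (rule inj_onI) (metis atLeastAtMost_iff f)
  then have "card {0..?k} \<le> card (UNIV :: 'n set)"
    by (rule card_inj_on_le) auto
  then show ?thesis by simp
qed

lemma card_Lv:
  assumes "S \<noteq> {}"
  shows "card (N \<inter> \<phi> ` Lv k) \<le> min (card N) (CARD('n) - 1)"
proof -
  have "card (N \<inter> \<phi> ` Lv k) \<le> card N" by (rule card_mono) auto
  moreover have "card (N \<inter> \<phi> ` Lv k) \<le> card (\<phi> ` Lv k)" by (rule card_mono) auto
  moreover have "card (\<phi> ` Lv k) \<le> card (Lv k)" by (rule card_image_le) simp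
  moreover have "Lv k \<subseteq> UNIV - S"
  proof
    fix x assume x: "x \<in> Lv k"
    then have "x \<in> R" "dist x \<ge> 1" unfolding Lv_def by auto
    then have "x \<notin> S" using dist0[of x] by auto
    then show "x \<in> UNIV - S" by simp
  qed
  then have "card (Lv k) \<le> card (UNIV - S)" by (rule card_mono[rotated]) simp
  moreover have "card (UNIV - S) = CARD('n) - card S" by (simp add: card_Diff_subset)
  moreover have "card S \<ge> 1" using assms by (simp add: Suc_le_eq card_gt_0_iff)
  ultimately show ?thesis by linarith
qed

lemma wpath_bound:
  assumes wp: "wpath a r \<delta>"
    and E: "closedset T E" "a \<in> E"
    and vm: "\<And>l. l \<in> E \<Longrightarrow> v$l \<le> m"
    and vs: "\<And>l. l \<in> S \<Longrightarrow> v$l \<le> s" and sm: "s \<le> m"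
    and eq: "\<And>j. j \<in> E \<Longrightarrow> v$j \<le> Dc + (T *v v)$j" and D0: "Dc \<ge> 0"
  shows "v$a \<le> r * Dc + \<delta> * s + (1 - \<delta>) * m \<and> 0 < \<delta> \<and> \<delta> \<le> 1"
  using wp E(2)
proof (induction rule: wpath.induct)
  case (base a)
  then show ?case using vs by simp
next
  case (step a b p r d)
  have bE: "b \<in> E" using step(1,2) E(1) step.prems unfolding closedset_def by force
  have IH: "v$b \<le> r * Dc + d * s + (1 - d) * m" "0 < d" "d \<le> 1" using step.IH[OF bE] by auto
  have Tab1: "T$a$b \<le> 1"
  proof -
    have "T$a$b \<le> (\<Sum>l\<in>UNIV. T$a$l)"
      by (rule member_le_sum) (use T_stoch in \<open>auto simp: stoch_def\<close>)
    then show ?thesis using T_stoch by (simp add: stoch_def)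
  qed
  let ?g = "\<chi> l. if l = b then v$b else m"
  have "(T *v v)$a \<le> (T *v ?g)$a"
  proof -
    have "(\<Sum>l\<in>UNIV. T$a$l * v$l) \<le> (\<Sum>l\<in>UNIV. T$a$l * ?g$l)"
    proof (rule sum_mono)
      fix l
      show "T$a$l * v$l \<le> T$a$l * ?g$l"
      proof (cases "T$a$l > 0")
        case True
        then have "l \<in> E" using E(1) step.prems unfolding closedset_def by blast
        then show ?thesis using True vm by (auto intro: mult_left_mono)
      next
        case False
        then have "T$a$l = 0" using T_stoch unfolding stoch_def by (meson not_less order_antisym)
        then show ?thesis by simp
      qed
    qed
    then show ?thesis by (simp add: matrix_vector_mult_def)
  qed
  also have "(T *v ?g)$a = m + T$a$b * (v$b - m)"
  proof -
    have "(\<Sum>l\<in>UNIV. T$a$l * ?g$l) = (\<Sum>l\<in>UNIV. T$a$l * m + (if l = b then T$a$b * (v$b - m) else 0))"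
      by (rule sum.cong) (auto simp: algebra_simps)
    also have "\<dots> = m + T$a$b * (v$b - m)"
      using T_stoch by (simp add: sum.distrib sum_distrib_right[symmetric] stoch_def)
    finally show ?thesis by (simp add: matrix_vector_mult_def)
  qed
  finally have "(T *v v)$a \<le> m + T$a$b * (v$b - m)" .
  moreover have "T$a$b * (v$b - m) \<le> p * (v$b - m)"
    using step(1) vm[OF bE] by (intro mult_right_mono_neg) auto
  moreover have "p * (v$b - m) \<le> p * (r * Dc + d * (s - m))"
    using IH(1) step(2) by (intro mult_left_mono) (auto simp: algebra_simps)
  moreover have "p * (r * Dc) \<le> r * Dc" using Tab1 step(1,2) D0 by (intro mult_left_le_one_le) auto
  moreover have "v$a \<le> Dc + (T *v v)$a" using eq step.prems by blast
  ultimately have "v$a \<le> Dc + r * Dc + m + (p * d) * (s - m)" by (simp add: algebra_simps)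
  moreover have "0 < p * d" using step(2) IH(2) by simp
  moreover have "p * d \<le> 1" using Tab1 step(1) IH(2,3) by (simp add: mult_le_one)
  ultimately show ?case by (simp add: algebra_simps)
qed

end


context mchain begin

lemma reach_R:
  assumes "(a, b) \<in> {(x, y). T$x$y > 0}\<^sup>*" "b \<in> S"
  shows "a \<in> R"
  using assms(1)
proof (induction rule: converse_rtrancl_induct)
  case base
  then show ?case using assms(2) R_D[of b 0] by simp
next
  case (step x y)
  then have "T$x$y > 0" by simp
  then show ?case using edge_dist[OF step(3)] by blast
qed

lemma max_gap:
  fixes Dc :: real
  assumes E: "closedset T E" "a \<in> E" and aR: "a \<in> R" and S: "S \<noteq> {}"
    and vm: "\<And>l. l \<in> E \<Longrightarrow> v$l \<le> v$a"
    and vs: "\<And>l. l \<in> S \<Longrightarrow> v$l \<le> s"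
    and eq: "\<And>j. j \<in> E \<Longrightarrow> v$j \<le> Dc + (T *v v)$j" and D0: "Dc \<ge> 0"
  shows "v$a - s \<le> real (CARD('n) - 1) * Dc * M ^ min (card N) (CARD('n) - 1)"
proof (cases "s \<le> v$a")
  case False
  have "0 \<le> real (CARD('n) - 1) * Dc * M ^ min (card N) (CARD('n) - 1)"
    using D0 M1 by simp
  then show ?thesis using False by linarith
next
  case True
  let ?K = "min (card N) (CARD('n) - 1)"
  let ?r = "dist a"
  obtain d where d: "wpath a ?r d" "d \<ge> (1 / M) ^ card (N \<inter> \<phi> ` Lv ?r)"
    using wpath_exists[OF aR refl] by blast
  have "card (N \<inter> \<phi> ` Lv ?r) \<le> ?K" by (rule card_Lv[OF S])
  then have "(1 / M) ^ ?K \<le> (1 / M) ^ card (N \<inter> \<phi> ` Lv ?r)"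
    by (rule power_decreasing) (use M1 in auto)
  then have dK: "d \<ge> (1 / M) ^ ?K" using d(2) by linarith
  have G: "v$a \<le> ?r * Dc + d * s + (1 - d) * v$a \<and> 0 < d \<and> d \<le> 1"
    by (rule wpath_bound[OF d(1) E vm vs True eq D0])
  then have dX: "d * (v$a - s) \<le> ?r * Dc" by (simp add: algebra_simps)
  have MK: "d * M ^ ?K \<ge> 1"
  proof -
    have "(1 / M) ^ ?K * M ^ ?K = 1" using M1 by (simp add: power_one_over)
    moreover have "(1 / M) ^ ?K * M ^ ?K \<le> d * M ^ ?K" using dK M1 by (intro mult_right_mono) auto
    ultimately show ?thesis by simp
  qed
  have X0: "v$a - s \<ge> 0" using True by simp
  have "v$a - s \<le> (d * M ^ ?K) * (v$a - s)" using MK X0 by (simp add: mult_le_cancel_right1)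
  also have "\<dots> = M ^ ?K * (d * (v$a - s))" by (simp add: algebra_simps)
  also have "\<dots> \<le> M ^ ?K * (?r * Dc)" using dX M1 by (intro mult_left_mono) auto
  also have rb: "real ?r \<le> real (CARD('n) - 1)" using dist_bound[OF aR] by (simp only: of_nat_le_iff)
  have "M ^ ?K * (?r * Dc) \<le> M ^ ?K * (real (CARD('n) - 1) * Dc)"
    using rb D0 M1 by (intro mult_left_mono mult_right_mono) auto
  finally show ?thesis by (simp add: algebra_simps)
qed

end

lemma hnorm_nonneg: "hnorm x \<ge> 0"
proof -
  obtain i :: 'a where True by simp
  have "Min (range (\<lambda>i. x$i)) \<le> x$i" by (rule Min_le) auto
  moreover have "x$i \<le> Max (range (\<lambda>i. x$i))" by (rule Max_ge) auto
  ultimately show ?thesis unfolding hnorm_def by linarith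
qed

locale game_rat = game_bias Is Hs cc P W v0 lam
  for Is :: "'n::finite \<Rightarrow> 'm::finite set" and Hs :: "'m \<Rightarrow> 'q::finite set"
    and cc P W v0 lam +
  fixes Mr :: real
  assumes Mr1: "Mr \<ge> 1"
    and P_lowb: "P$h$l > 0 \<Longrightarrow> P$h$l \<ge> (if h \<in> nondet_states P then 1 / Mr else 1)"
begin

lemma chain_inst: "mchain T0 \<tau>0 (nondet_states P) Mr"
proof
  show "stoch T0" by (rule T0_stoch)
  show "\<tau>0 a = \<tau>0 x \<Longrightarrow> T0 $ a = T0 $ x" for a x by (simp add: Tm_def)
  show "T0$j$l > 0 \<Longrightarrow> T0$j$l \<ge> (if \<tau>0 j \<in> nondet_states P then 1 / Mr else 1)" for j l
    using P_lowb[of "\<tau>0 j" l] by (simp add: Tm_def)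
  show "Mr \<ge> 1" by (rule Mr1)
qed

abbreviation "E0 \<equiv> {(x, y). T0$x$y > 0}"

definition reach :: "'n \<Rightarrow> 'n set" where "reach a = {b. (a, b) \<in> E0\<^sup>*}"

lemma reach_closed: "closedset T0 (reach a)"
  unfolding closedset_def reach_def by (auto intro: rtrancl_into_rtrancl)

lemma reach_self: "a \<in> reach a" unfolding reach_def by simp

lemma reach_trans: "b \<in> reach a \<Longrightarrow> reach b \<subseteq> reach a"
  unfolding reach_def by (auto intro: rtrancl_trans)

lemma class_exists:
  "\<exists>a0. a0 \<in> reach a \<and> (\<forall>l\<in>reach a0. \<forall>t\<in>reach a0. t \<in> reach l)"
proof -
  let ?X = "card ` reach ` reach a"
  have "Min ?X \<in> ?X" by (rule Min_in) (auto intro: reach_self)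
  then obtain a0 where a0: "a0 \<in> reach a" "card (reach a0) = Min ?X" by auto
  have "reach l = reach a0" if l: "l \<in> reach a0" for l
  proof -
    have sub: "reach l \<subseteq> reach a0" by (rule reach_trans[OF l])
    have "l \<in> reach a" using reach_trans[OF a0(1)] l by blast
    then have "Min ?X \<le> card (reach l)" by (intro Min_le) auto
    then have "card (reach a0) \<le> card (reach l)" using a0(2) by simp
    moreover have "card (reach l) \<le> card (reach a0)" by (rule card_mono[OF _ sub]) simp
    ultimately have "card (reach l) = card (reach a0)" by simp
    then show ?thesis using sub by (intro card_subset_eq) auto
  qed
  then have "\<forall>l\<in>reach a0. \<forall>t\<in>reach a0. t \<in> reach l" by blast
  then show ?thesis using a0(1) by blast
qed

lemma gen_bound:
  fixes u :: "real^'n" and Dc :: real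
  assumes u_eq: "\<And>j. u$j \<le> Dc + (T0 *v u)$j" and D0: "Dc \<ge> 0"
    and u_cls: "\<And>C. closedset T0 C \<Longrightarrow> C \<noteq> {} \<Longrightarrow> Min ((\<lambda>j. u$j) ` C) \<le> 0"
  shows "u$j \<le> 2 * (real (CARD('n) - 1) * Dc * Mr ^ min (card (nondet_states P)) (CARD('n) - 1))"
proof -
  let ?Kb = "real (CARD('n) - 1) * Dc * Mr ^ min (card (nondet_states P)) (CARD('n) - 1)"
  have "Max (range (\<lambda>l. u$l)) \<in> range (\<lambda>l. u$l)" by (rule Max_in) auto
  then obtain jm where jm: "u$jm = Max (range (\<lambda>l. u$l))" by (metis rangeE)
  have jmax: "u$l \<le> u$jm" for l unfolding jm by (rule Max_ge) auto
  obtain a0 where a0: "a0 \<in> reach jm" "\<forall>l\<in>reach a0. \<forall>t\<in>reach a0. t \<in> reach l"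
    using class_exists by blast
  let ?C = "reach a0"
  have Ccl: "closedset T0 ?C" by (rule reach_closed)
  have Cne: "?C \<noteq> {}" using reach_self by blast
  have "Min ((\<lambda>j. u$j) ` ?C) \<in> (\<lambda>j. u$j) ` ?C" by (rule Min_in) (use Cne in auto)
  then obtain j0 where j0: "j0 \<in> ?C" "u$j0 = Min ((\<lambda>j. u$j) ` ?C)" by auto
  have "Max ((\<lambda>j. u$j) ` ?C) \<in> (\<lambda>j. u$j) ` ?C" by (rule Max_in) (use Cne in auto)
  then obtain j1 where j1: "j1 \<in> ?C" "u$j1 = Max ((\<lambda>j. u$j) ` ?C)" by auto
  have j1max: "u$l \<le> u$j1" if "l \<in> ?C" for l unfolding j1(2) by (rule Max_ge) (use that in auto)
  have step1: "u$jm - u$j1 \<le> ?Kb"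
  proof -
    interpret c1: mchain T0 \<tau>0 "nondet_states P" Mr ?C by (rule chain_inst)
    have "jm \<in> c1.R" using c1.reach_R[of jm a0] a0(1) reach_self unfolding reach_def by blast
    moreover have "closedset T0 UNIV" by (simp add: closedset_def)
    moreover have "\<And>l. l \<in> UNIV \<Longrightarrow> u$l \<le> u$jm" using jmax by blast
    moreover have "\<And>j. j \<in> UNIV \<Longrightarrow> u$j \<le> Dc + (T0 *v u)$j" using u_eq by blast
    ultimately show ?thesis
      using c1.max_gap[of UNIV jm u "u$j1" Dc] Cne j1max D0 by blast
  qed
  have step2: "u$j1 - u$j0 \<le> ?Kb"
  proof -
    interpret c2: mchain T0 \<tau>0 "nondet_states P" Mr "{j0}" by (rule chain_inst)
    have "j0 \<in> reach j1" using a0(2) j0(1) j1(1) by blast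
    then have "j1 \<in> c2.R" using c2.reach_R[of j1 j0] unfolding reach_def by blast
    moreover have "\<And>l. l \<in> {j0} \<Longrightarrow> u$l \<le> u$j0" by simp
    moreover have "\<And>j. j \<in> ?C \<Longrightarrow> u$j \<le> Dc + (T0 *v u)$j" using u_eq by blast
    ultimately show ?thesis
      using c2.max_gap[of ?C j1 u "u$j0" Dc] Ccl j1(1) j1max D0 by blast
  qed
  have "u$j0 \<le> 0" using u_cls[OF Ccl Cne] j0(2) by simp
  then show ?thesis using step1 step2 jmax[of j] by linarith
qed

lemma c0_bound: "\<bar>c0 $ j - lam\<bar> \<le> 2 * W"
proof -
  have "\<bar>c0 $ j\<bar> \<le> W" using pol_props(1) cc_bound unfolding valid_def cv_def by auto
  then show ?thesis using lam_bound by linarith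
qed

lemma W_nonneg: "W \<ge> 0" using lam_bound by linarith

lemma vstar_hnorm:
  "hnorm vstar \<le> 8 * (real CARD('n) - 1) * W * Mr ^ min (card (nondet_states P)) (CARD('n) - 1)"
proof -
  let ?Kb = "real (CARD('n) - 1) * (2 * W) * Mr ^ min (card (nondet_states P)) (CARD('n) - 1)"
  have D0: "2 * W \<ge> 0" using W_nonneg by simp
  have up: "vstar $ j \<le> 2 * ?Kb" for j
  proof (rule gen_bound[OF _ D0])
    fix j show "vstar $ j \<le> 2 * W + (T0 *v vstar) $ j" using vstar_chain[of j] c0_bound[of j] by linarith
  next
    fix C assume "closedset T0 C" "C \<noteq> {}"
    then show "Min ((\<lambda>j. vstar $ j) ` C) \<le> 0" by (rule closed_min_le0)
  qed
  have lo: "(- vstar) $ j \<le> 2 * ?Kb" for j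
  proof (rule gen_bound[OF _ D0])
    fix j show "(- vstar) $ j \<le> 2 * W + (T0 *v (- vstar)) $ j"
      using vstar_chain[of j] c0_bound[of j] Tv_neg[of T0 vstar j] vector_uminus_component[of vstar j]
      by linarith
  next
    fix C assume C: "closedset T0 C" "C \<noteq> {}"
    have "Max ((\<lambda>j. vstar $ j) ` C) \<ge> 0" by (rule closed_max_ge0[OF C])
    moreover have "Max ((\<lambda>j. vstar $ j) ` C) \<in> (\<lambda>j. vstar $ j) ` C" by (rule Max_in) (use C(2) in auto)
    ultimately obtain j where j: "j \<in> C" "vstar $ j \<ge> 0" by auto
    have "Min ((\<lambda>j. (- vstar) $ j) ` C) \<le> (- vstar) $ j" by (rule Min_le) (use j in auto)
    then show "Min ((\<lambda>j. (- vstar) $ j) ` C) \<le> 0" using j(2) by simp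
  qed
  have "Max (range (\<lambda>i. vstar$i)) \<in> range (\<lambda>i. vstar$i)" by (rule Max_in) auto
  then obtain j1 where j1: "Max (range (\<lambda>i. vstar$i)) = vstar $ j1" by (metis rangeE)
  have "Min (range (\<lambda>i. vstar$i)) \<in> range (\<lambda>i. vstar$i)" by (rule Min_in) auto
  then obtain j0 where j0: "Min (range (\<lambda>i. vstar$i)) = vstar $ j0" by (metis rangeE)
  have "hnorm vstar = vstar $ j1 - vstar $ j0" unfolding hnorm_def j1 j0 ..
  also have "\<dots> \<le> 4 * ?Kb" using up[of j1] lo[of j0] by simp
  also have "\<dots> = 8 * (real CARD('n) - 1) * W * Mr ^ min (card (nondet_states P)) (CARD('n) - 1)"
    by (simp add: of_nat_diff algebra_simps)
  finally show ?thesis .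
qed

lemma R_F_le: "R_F F \<le> hnorm vstar"
  unfolding R_F_def lam_eq
proof (rule cInf_lower)
  show "hnorm vstar \<in> hnorm ` {u. F u = (\<chi> i. lam + u $ i)}" using vstar_bias by blast
  show "bdd_below (hnorm ` {u. F u = (\<chi> i. lam + u $ i)})"
    by (rule bdd_belowI[of _ 0]) (auto simp: hnorm_nonneg)
qed

end


lemma Max_ereal_restrict:
  fixes f :: "'a::finite \<Rightarrow> ereal"
  assumes "S \<noteq> {}" "\<And>h. h \<notin> S \<Longrightarrow> f h = -\<infinity>" "\<And>h. h \<in> S \<Longrightarrow> f h = ereal (g h)"
  shows "Max (range f) = ereal (Max (g ` S))"
proof (rule Max_eqI)
  show "finite (range f)" by simp
  fix y assume "y \<in> range f"
  then obtain h where h: "y = f h" by blast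
  show "y \<le> ereal (Max (g ` S))"
  proof (cases "h \<in> S")
    case True
    then have "g h \<le> Max (g ` S)" by (intro Max_ge) auto
    then show ?thesis using h assms(3)[OF True] by simp
  next
    case False then show ?thesis using h assms(2) by simp
  qed
next
  have "Max (g ` S) \<in> g ` S" by (rule Max_in) (use assms(1) in auto)
  then obtain h0 where "h0 \<in> S" "Max (g ` S) = g h0" by auto
  then show "ereal (Max (g ` S)) \<in> range f" using assms(3) by (metis rangeI)
qed

lemma Min_ereal_restrict:
  fixes f :: "'a::finite \<Rightarrow> ereal"
  assumes "S \<noteq> {}" "\<And>h. h \<notin> S \<Longrightarrow> f h = \<infinity>" "\<And>h. h \<in> S \<Longrightarrow> f h = ereal (g h)"
  shows "Min (range f) = ereal (Min (g ` S))"
proof (rule Min_eqI)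
  show "finite (range f)" by simp
  fix y assume "y \<in> range f"
  then obtain h where h: "y = f h" by blast
  show "ereal (Min (g ` S)) \<le> y"
  proof (cases "h \<in> S")
    case True
    then have "Min (g ` S) \<le> g h" by (intro Min_le) auto
    then show ?thesis using h assms(3)[OF True] by simp
  next
    case False then show ?thesis using h assms(2) by simp
  qed
next
  have "Min (g ` S) \<in> g ` S" by (rule Min_in) (use assms(1) in auto)
  then obtain h0 where "h0 \<in> S" "Min (g ` S) = g h0" by auto
  then show "ereal (Min (g ` S)) \<in> range f" using assms(3) by (metis rangeI)
qed

lemma ereal_fin: "x \<noteq> \<infinity> \<Longrightarrow> x \<noteq> -\<infinity> \<Longrightarrow> x = ereal (real_of_ereal x)"
  by (cases x) auto

lemma aux8: assumes "(1::real) \<le> k" shows "8 * (k - 1) \<le> 10 * k^2"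
proof -
  have "k * 1 \<le> k * k" using assms by (intro mult_left_mono) auto
  then have "k \<le> k * k" by simp
  then have "10 * k \<le> 10 * (k * k)" by simp
  moreover have "8 * (k - 1) \<le> 10 * k" using assms by simp
  ultimately show ?thesis unfolding power2_eq_square by (rule order_trans[rotated])
qed

theorem mainTheorem10:
  fixes A :: "ereal^'n^'m" and B :: "ereal^'q^'m" and P :: "real^'n^'q"
    and Q :: "int^'n^'q" and M :: nat
  assumes A_trop: "\<forall>i j. A$i$j \<noteq> \<infinity>"
    and B_trop: "\<forall>i h. B$i$h \<noteq> \<infinity>"
    and A_col: "\<forall>j. \<exists>i. A$i$j \<noteq> -\<infinity>"
    and B_row: "\<forall>i. \<exists>h. B$i$h \<noteq> -\<infinity>"
    and A_int: "\<forall>i j. A$i$j \<noteq> -\<infinity> \<longrightarrow> (\<exists>z::int. A$i$j = ereal (of_int z))"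
    and B_int: "\<forall>i h. B$i$h \<noteq> -\<infinity> \<longrightarrow> (\<exists>z::int. B$i$h = ereal (of_int z))"
    and P_nonneg: "\<forall>i l. P$i$l \<ge> 0"
    and P_stoch: "\<forall>i. (\<Sum>l\<in>UNIV. P$i$l) = 1"
    and M_pos: "M > 0"
    and P_rat: "\<forall>i l. P$i$l = real_of_int (Q$i$l) / real M"
    and has_bias: "\<exists>v. is_bias (shapley A B P) v"
  shows "R_F (shapley A B P) \<le> hnorm (blackwell_bias (shapley A B P))
       \<and> hnorm (blackwell_bias (shapley A B P))
           \<le> 10 * real (CARD('n))^2 * W_param A B
              * real M ^ min (card (nondet_states P)) (CARD('n) - 1)"
proof -
  define Is where "Is j = {i. A$i$j \<noteq> -\<infinity>}" for j
  define Hs where "Hs i = {h. B$i$h \<noteq> -\<infinity>}" for i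
  define cc where "cc i j h = real_of_ereal (B$i$h) - real_of_ereal (A$i$j)" for i j h
  let ?W = "W_param A B"
  have Is_ne: "Is j \<noteq> {}" for j using A_col unfolding Is_def by auto
  have Hs_ne: "Hs i \<noteq> {}" for i using B_row unfolding Hs_def by auto
  have finW: "finite {\<bar>real_of_ereal (A$i$j) - real_of_ereal (B$i$h)\<bar> | i j h.
                        A$i$j \<noteq> -\<infinity> \<and> B$i$h \<noteq> -\<infinity>}"
  proof -
    have "{\<bar>real_of_ereal (A$i$j) - real_of_ereal (B$i$h)\<bar> | i j h.
                        A$i$j \<noteq> -\<infinity> \<and> B$i$h \<noteq> -\<infinity>}
          \<subseteq> (\<lambda>(i, j, h). \<bar>real_of_ereal (A$i$j) - real_of_ereal (B$i$h)\<bar>) ` UNIV"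
    proof
      fix y assume "y \<in> {\<bar>real_of_ereal (A$i$j) - real_of_ereal (B$i$h)\<bar> | i j h.
                        A$i$j \<noteq> -\<infinity> \<and> B$i$h \<noteq> -\<infinity>}"
      then obtain i j h where "y = \<bar>real_of_ereal (A$i$j) - real_of_ereal (B$i$h)\<bar>" by blast
      then show "y \<in> (\<lambda>(i, j, h). \<bar>real_of_ereal (A$i$j) - real_of_ereal (B$i$h)\<bar>) ` UNIV"
        by (intro image_eqI[where x="(i, j, h)"]) auto
    qed
    then show ?thesis by (rule finite_subset) simp
  qed
  have cc_bound: "\<bar>cc i j h\<bar> \<le> ?W" if "i \<in> Is j" "h \<in> Hs i" for i j h
  proof -
    have "\<bar>real_of_ereal (A$i$j) - real_of_ereal (B$i$h)\<bar> \<le> ?W"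
      unfolding W_param_def by (rule Max_ge[OF finW]) (use that in \<open>auto simp: Is_def Hs_def\<close>)
    then show ?thesis unfolding cc_def by (simp add: abs_minus_commute)
  qed
  interpret g: game Is Hs cc P ?W
    by unfold_locales (use Is_ne Hs_ne P_nonneg P_stoch cc_bound in auto)
  have shF: "shapley A B P = g.F"
  proof (rule ext)
    fix x
    show "shapley A B P x = g.F x"
    proof -
      let ?Y = "\<lambda>i. Max ((\<lambda>h. real_of_ereal (B$i$h) + (P *v x)$h) ` Hs i)"
      have tm: "trop_mul B (P *v x) $ i = ereal (?Y i)" for i
        unfolding trop_mul_def vec_lambda_beta
      proof (rule Max_ereal_restrict[OF Hs_ne])
        fix h assume "h \<notin> Hs i"
        then show "B$i$h + ereal ((P *v x)$h) = -\<infinity>" by (simp add: Hs_def)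
      next
        fix h assume "h \<in> Hs i"
        then have "B$i$h \<noteq> \<infinity>" "B$i$h \<noteq> -\<infinity>" using B_trop by (auto simp: Hs_def)
        then obtain r where r: "B$i$h = ereal r" by (cases "B$i$h") auto
        show "B$i$h + ereal ((P *v x)$h) = ereal (real_of_ereal (B$i$h) + (P *v x)$h)"
          unfolding r by simp
      qed
      let ?Z = "\<lambda>j. Min ((\<lambda>i. - real_of_ereal (A$i$j) + ?Y i) ` Is j)"
      have ts: "trop_sharp A (trop_mul B (P *v x)) $ j = ereal (?Z j)" for j
        unfolding trop_sharp_def vec_lambda_beta tm
      proof (rule Min_ereal_restrict[OF Is_ne])
        fix i assume "i \<notin> Is j"
        then show "- A$i$j + ereal (?Y i) = \<infinity>" by (simp add: Is_def)
      next
        fix i assume "i \<in> Is j"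
        then have "A$i$j \<noteq> \<infinity>" "A$i$j \<noteq> -\<infinity>" using A_trop by (auto simp: Is_def)
        then obtain r where r: "A$i$j = ereal r" by (cases "A$i$j") auto
        show "- A$i$j + ereal (?Y i) = ereal (- real_of_ereal (A$i$j) + ?Y i)"
          unfolding r by simp
      qed
      have fx: "g.F x $ j = ?Z j" for j
      proof -
        have e: "Max ((\<lambda>h. cc i j h + (P *v x)$h) ` Hs i) = - real_of_ereal (A$i$j) + ?Y i" for i
        proof -
          have eq: "(\<lambda>h. cc i j h + (P *v x)$h) = (\<lambda>h. (real_of_ereal (B$i$h) + (P *v x)$h) + (- real_of_ereal (A$i$j)))"
            by (rule ext) (simp add: cc_def)
          have "Max ((\<lambda>h. cc i j h + (P *v x)$h) ` Hs i) =
                Max ((\<lambda>h. (real_of_ereal (B$i$h) + (P *v x)$h) + (- real_of_ereal (A$i$j))) ` Hs i)"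
            by (simp only: eq)
          also have "\<dots> = ?Y i + (- real_of_ereal (A$i$j))"
            by (rule Max_add_commute[OF finite Hs_ne])
          finally show ?thesis by simp
        qed
        show ?thesis unfolding g.F_def vec_lambda_beta e ..
      qed
      show ?thesis unfolding shapley_def by (simp add: vec_eq_iff ts fx)
    qed
  qed
  obtain v0 lam where bias0: "g.F v0 = (\<chi> i. lam + v0$i)"
    using has_bias unfolding is_bias_def shF by blast
  have Mr1: "real M \<ge> 1" using M_pos by simp
  have P_lowb: "P$h$l \<ge> (if h \<in> nondet_states P then 1 / real M else 1)" if pos: "P$h$l > 0" for h l
  proof (cases "h \<in> nondet_states P")
    case True
    have "real_of_int (Q$h$l) / real M > 0" using pos P_rat by simp
    then have "Q$h$l > 0" using M_pos by (simp add: zero_less_divide_iff)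
    then have "real_of_int (Q$h$l) \<ge> 1" by simp
    then have "real_of_int (Q$h$l) / real M \<ge> 1 / real M" using M_pos by (simp add: divide_right_mono)
    then show ?thesis using True P_rat by simp
  next
    case False
    have z: "P$h$l' = 0" if "l' \<noteq> l" for l'
    proof -
      have "\<not> (0 < P$h$l')" using False pos that unfolding nondet_states_def by blast
      moreover have "0 \<le> P$h$l'" using P_nonneg by blast
      ultimately show ?thesis by linarith
    qed
    have "(\<Sum>l'\<in>UNIV. P$h$l') = P$h$l + (\<Sum>l'\<in>UNIV - {l}. P$h$l')"
      by (rule sum.remove) auto
    also have "(\<Sum>l'\<in>UNIV - {l}. P$h$l') = 0" using z by (intro sum.neutral) auto
    finally have "P$h$l = 1" using P_stoch by simp
    then show ?thesis using False by simp
  qed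
  interpret gr: game_rat Is Hs cc P ?W v0 lam "real M"
    by (rule game_rat.intro[OF game_bias.intro[OF g.game_axioms game_bias_axioms.intro[OF bias0]]
          game_rat_axioms.intro[OF Mr1 P_lowb]])
  have W0: "?W \<ge> 0" by (rule gr.W_nonneg)
  have bb: "blackwell_bias (shapley A B P) = gr.vstar" unfolding shF by (rule gr.blackwell_eq)
  have "hnorm gr.vstar \<le> 8 * (real CARD('n) - 1) * ?W * real M ^ min (card (nondet_states P)) (CARD('n) - 1)"
    by (rule gr.vstar_hnorm)
  also have "\<dots> \<le> 10 * real (CARD('n))^2 * ?W * real M ^ min (card (nondet_states P)) (CARD('n) - 1)"
  proof -
    have n1: "real CARD('n) \<ge> 1" by simp
    have a: "8 * (real CARD('n) - 1) \<le> 10 * real (CARD('n))^2" by (rule aux8[OF n1])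
    have b: "0 \<le> ?W * real M ^ min (card (nondet_states P)) (CARD('n) - 1)" using W0 by simp
    have "(8 * (real CARD('n) - 1)) * (?W * real M ^ min (card (nondet_states P)) (CARD('n) - 1))
       \<le> (10 * real (CARD('n))^2) * (?W * real M ^ min (card (nondet_states P)) (CARD('n) - 1))"
      by (rule mult_right_mono[OF a b])
    then show ?thesis by (simp only: mult.assoc)
  qed
  finally have h2: "hnorm gr.vstar \<le> 10 * real (CARD('n))^2 * ?W * real M ^ min (card (nondet_states P)) (CARD('n) - 1)" .
  have h1: "R_F (shapley A B P) \<le> hnorm gr.vstar" unfolding shF by (rule gr.R_F_le)
  show ?thesis using h1 h2 bb by simp
qed


end
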